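(* Let $X,Y$ be $c$-free with respect to $(\varphi,\psi)$ on $\mathbb{C}\langle X,Y\rangle$, $A,B\in M_N(\mathbb{C})$, $\mathbf{\Psi}=(I-z(AX+BY))^{-1}$. With $F_Y=\beta^{\delta,\psi}_Y(Y\mathbf{\Psi})$, $F^\varphi_X=\beta^{\delta,\varphi}_X(X\mathbf{\Psi})$, $F^\varphi_Y=\beta^{\delta,\varphi}_Y(Y\mathbf{\Psi})$, $$\overrightarrow{E}^\varphi_X[\mathbf{\Psi}]=(I-zAF^\varphi_X-zBF^\varphi_Y)^{-1}(I-zAF^\varphi_X-zBF_Y)(I-zAX-zBF_Y)^{-1}.$$
   Context: $X,Y$ $c$-free w.r.t. $(\varphi,\psi)$: $\psi(u_1\cdots u_n)=0$ and $\varphi(u_1\cdots u_n)=\prod\varphi(u_j)$ whenever the $u_j$ alternate between $\mathbb{C}\langle X\rangle$, $\mathbb{C}\langle Y\rangle$ with $\psi(u_j)=0$. Boolean cumulants: $\theta(a_1\cdots a_n)=\sum_k\beta^\theta_k(a_1,\dots,a_k)\theta(a_{k+1}\cdots a_n)$. $\beta^{\delta,\theta}_X(1)=1$, $\beta^{\delta,\theta}_X(Z_1\cdots Z_k)=\beta^\theta_k(Z_1,\dots,Z_k)$ if $Z_1=Z_k=X$, else $0$ (similarly for $Y$). $\beta^{b,\theta}_X(1)=1$ and for a monomial with block factorization $W=U_1\cdots U_n$ (alternating nonempty pure monomials), $\beta^{b,\theta}_X(W)=\beta^\theta_n(U_1,\dots,U_n)$ if $W$ starts and ends with $X$, else $0$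 (similarly $Y$). $\overrightarrow{\delta}_X(W)=\sum_{W=UXV}U\otimes XV$. $E^\psi_X$ is the linear map with $E^\psi_X[X_0]=X_0$ and for $W=X_0Y_1X_1\cdots Y_nX_n$ in block form ($n\ge1$, $X_0,X_n$ possibly $1$) $E^\psi_X[W]=\sum_{p=0}^{n-1}\sum_{0=i_0<i_1<\dots<i_{p+1}=n}X_0X_{i_1}\cdots X_{i_p}X_n\prod_{j=0}^p\beta^\psi_{2(i_{j+1}-i_j)-1}(Y_{i_j+1},X_{i_j+1},\dots,Y_{i_{j+1}})$. $\overrightarrow{E}^\varphi_X:\mathbb{C}\langle X,Y\rangle\to\mathbb{C}\langle X\rangle$ is the linear map defined recursively by: $\overrightarrow{E}^\varphi_X[P(X)]=P(X)$; $\overrightarrow{E}^\varphi_X[P(Y)]=\varphi(P(Y))$; for monomials $W$ starting with $Y$, $\overrightarrow{E}^\varphi_X[W]=\beta^{b,\varphi}_Y(W)+(\beta^{b,\varphi}_Y\otimes\overrightarrow{E}^\varphi_X)[\overrightarrow{\delta}_XW]$; for $W$ starting with $X$, $\overrightarrow{E}^\varphi_X[W]=E^\psi_X[W]+(\beta^{b,\varphi}_X\otimes(\overrightarrow{E}^\varphi_X-E^\psi_X))[\overrightarrow{\delta}_YW]$. All maps act entrywise on matrices and coefficientwise on formal power series in $z$; $\mathbf{\Psi}=\sum_nz^n(AX+BY)^n$ and inverses are formal power series inverses. *)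

theory Defs
  imports "HOL-Analysis.Analysis" "HOL-Library.Poly_Mapping"
begin

datatype letter = LX | LY

text \<open>Monomials of C<X,Y>: words over {X,Y}, wrapped so that + is concatenation
  (the free monoid); C<X,Y> is then the monoid algebra nword =>0 complex.\<close>
datatype nword = NW "letter list"

fun word_of :: "nword \<Rightarrow> letter list" where "word_of (NW w) = w"

instantiation nword :: monoid_add
begin
definition zero_nword_def: "0 = NW []"
definition plus_nword_def: "u + v = NW (word_of u @ word_of v)"
instance
proof
  fix a b c :: nword
  show "a + b + c = a + (b + c)" by (cases a; cases b; cases c) (simp add: plus_nword_def)
  show "0 + a = a" by (cases a) (simp add: plus_nword_def zero_nword_def)
  show "a + 0 = a" by (cases a) (simp add: plus_nword_def zero_nword_def)
qed
end

type_synonym ncpoly = "nword \<Rightarrow>\<^sub>0 complex"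

definition mono :: "letter list \<Rightarrow> ncpoly" where
  "mono w = Poly_Mapping.single (NW w) 1"

definition pc :: "complex \<Rightarrow> ncpoly" where
  "pc c = Poly_Mapping.single (0::nword) c"

definition lin :: "(letter list \<Rightarrow> complex) \<Rightarrow> ncpoly \<Rightarrow> complex" where
  "lin f p = (\<Sum>w\<in>Poly_Mapping.keys p. Poly_Mapping.lookup p w * f (word_of w))"

definition linP :: "(letter list \<Rightarrow> ncpoly) \<Rightarrow> ncpoly \<Rightarrow> ncpoly" where
  "linP f p = (\<Sum>w\<in>Poly_Mapping.keys p. pc (Poly_Mapping.lookup p w) * f (word_of w))"

definition in_alg :: "letter \<Rightarrow> ncpoly \<Rightarrow> bool" where
  "in_alg a p = (\<forall>w\<in>Poly_Mapping.keys p. set (word_of w) \<subseteq> {a})"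

text \<open>c-freeness of X, Y w.r.t. (phi, psi); phi, psi are given by their values on monomials.\<close>
definition cfree :: "(letter list \<Rightarrow> complex) \<Rightarrow> (letter list \<Rightarrow> complex) \<Rightarrow> bool" where
  "cfree \<phi> \<psi> = (\<forall>us ls. us \<noteq> [] \<and> length us = length ls
      \<and> (\<forall>i. Suc i < length ls \<longrightarrow> ls ! i \<noteq> ls ! Suc i)
      \<and> (\<forall>i<length us. in_alg (ls ! i) (us ! i) \<and> lin \<psi> (us ! i) = 0)
      \<longrightarrow> lin \<psi> (prod_list us) = 0 \<and> lin \<phi> (prod_list us) = (\<Prod>u\<leftarrow>us. lin \<phi> u))"

section \<open>Boolean cumulants (on monomial arguments; multilinear extension implicit)\<close>

function bcum :: "(letter list \<Rightarrow> complex) \<Rightarrow> letter list list \<Rightarrow> complex" where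
  "bcum \<theta> us = \<theta> (concat us)
     - (\<Sum>k\<in>{1..<length us}. bcum \<theta> (take k us) * \<theta> (concat (drop k us)))"
  by pat_completeness auto
termination by (relation "Wellfounded.measure (\<lambda>(_, us). length us)") auto

text \<open>Maximal block factorization of a monomial into pure nonempty blocks.\<close>
fun blocks :: "letter list \<Rightarrow> letter list list" where
  "blocks [] = []"
| "blocks (a # w) = (case blocks w of [] \<Rightarrow> [[a]]
      | u # us \<Rightarrow> if hd u = a then (a # u) # us else [a] # u # us)"

definition bdelta :: "(letter list \<Rightarrow> complex) \<Rightarrow> letter \<Rightarrow> letter list \<Rightarrow> complex" where
  "bdelta \<theta> a w = (if w = [] then 1
     else if hd w = a \<and> last w = a then bcum \<theta> (map (\<lambda>x. [x]) w) else 0)"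

definition bblock :: "(letter list \<Rightarrow> complex) \<Rightarrow> letter \<Rightarrow> letter list \<Rightarrow> complex" where
  "bblock \<theta> a w = (if w = [] then 1
     else if hd w = a \<and> last w = a then bcum \<theta> (blocks w) else 0)"

text \<open>A word starting with Y (or empty), Y1 X1 ... Yn Xn, parsed into the pairs (Yi, Xi).\<close>
lemma parse_dec:
  "w \<noteq> [] \<Longrightarrow> length (dropWhile (\<lambda>c. c = LX) (dropWhile (\<lambda>c. c = LY) w)) < length w"
proof (cases w)
  case (Cons a w')
  then show ?thesis
    using length_dropWhile_le[of "\<lambda>c. c = LX" w'] length_dropWhile_le[of "\<lambda>c. c = LY" w']
          length_dropWhile_le[of "\<lambda>c. c = LX" "dropWhile (\<lambda>c. c = LY) w'"]
    by (cases a) auto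
qed simp

function parse_pairs :: "letter list \<Rightarrow> (letter list \<times> letter list) list" where
  "parse_pairs w = (if w = [] then [] else
     (let y = takeWhile (\<lambda>c. c = LY) w; r = dropWhile (\<lambda>c. c = LY) w;
          x = takeWhile (\<lambda>c. c = LX) r; r' = dropWhile (\<lambda>c. c = LX) r
      in (y, x) # parse_pairs r'))"
  by pat_completeness auto
termination
  by (relation "Wellfounded.measure length") (auto intro: parse_dec)

text \<open>Tokens Y_a, X_a, ..., X_{b-1}, Y_b of a group of consecutive pairs.\<close>
definition gtok :: "(letter list \<times> letter list) list \<Rightarrow> letter list list" where
  "gtok ps = butlast (concat (map (\<lambda>(y, x). [y, x]) ps))"

text \<open>Sum over all cuts 0 = i_0 < ... < i_{p+1} = n of the pairs into consecutive groups.\<close>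
function Ggrp :: "(letter list \<Rightarrow> complex) \<Rightarrow> (letter list \<times> letter list) list \<Rightarrow> ncpoly" where
  "Ggrp \<psi> ps = (if ps = [] then 1 else
     (\<Sum>k\<in>{1..length ps}. pc (bcum \<psi> (gtok (take k ps))) * mono (snd (last (take k ps)))
                             * Ggrp \<psi> (drop k ps)))"
  by pat_completeness auto
termination by (relation "Wellfounded.measure (\<lambda>(_, ps). length ps)") auto

definition Epsi :: "(letter list \<Rightarrow> complex) \<Rightarrow> letter list \<Rightarrow> ncpoly" where
  "Epsi \<psi> w = mono (takeWhile (\<lambda>c. c = LX) w) * Ggrp \<psi> (parse_pairs (dropWhile (\<lambda>c. c = LX) w))"

function Ephi :: "(letter list \<Rightarrow> complex) \<Rightarrow> (letter list \<Rightarrow> complex) \<Rightarrow> letter list \<Rightarrow> ncpoly" where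
  "Ephi \<phi> \<psi> w =
    (if set w \<subseteq> {LX} then mono w
     else if set w \<subseteq> {LY} then pc (\<phi> w)
     else if hd w = LY then
       pc (bblock \<phi> LY w)
       + (\<Sum>k\<in>{k\<in>{1..<length w}. w ! k = LX}. pc (bblock \<phi> LY (take k w)) * Ephi \<phi> \<psi> (drop k w))
     else
       Epsi \<psi> w
       + (\<Sum>k\<in>{k\<in>{1..<length w}. w ! k = LY}.
            pc (bblock \<phi> LX (take k w)) * (Ephi \<phi> \<psi> (drop k w) - Epsi \<psi> (drop k w))))"
  by pat_completeness auto
termination by (relation "Wellfounded.measure (\<lambda>(_, _, w). length w)") auto

section \<open>Matrices (N x N, N = CARD('n)) and formal power series in z\<close>

fun mpow :: "ncpoly^'n::finite^'n \<Rightarrow> nat \<Rightarrow> ncpoly^'n^'n" where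
  "mpow M 0 = mat 1"
| "mpow M (Suc k) = M ** mpow M k"

definition mapm :: "('a \<Rightarrow> 'b) \<Rightarrow> 'a^'n^'m \<Rightarrow> 'b^'n^'m" where
  "mapm f M = (\<chi> i j. f (M $ i $ j))"

definition liftm :: "complex^'n^'m \<Rightarrow> ncpoly^'n^'m" where
  "liftm M = mapm pc M"

type_synonym ('n) mps = "nat \<Rightarrow> ncpoly^'n^'n"

definition sone :: "('n::finite) mps" where
  "sone k = (if k = 0 then mat 1 else 0)"

definition smult :: "('n::finite) mps \<Rightarrow> ('n::finite) mps \<Rightarrow> ('n::finite) mps" where
  "smult P Q k = (\<Sum>i\<le>k. P i ** Q (k - i))"

definition sinv :: "('n::finite) mps \<Rightarrow> ('n::finite) mps" where
  "sinv P = (THE Q. smult P Q = sone \<and> smult Q P = sone)"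

definition zs :: "('n::finite) mps \<Rightarrow> ('n::finite) mps" where
  "zs P k = (if k = 0 then 0 else P (k - 1))"

text \<open>AX + BY as a matrix over C<X,Y>, and Psi = sum_n z^n (AX+BY)^n.\<close>
definition AXBY :: "complex^'n^'n \<Rightarrow> complex^'n^'n \<Rightarrow> ncpoly^'n^'n" where
  "AXBY A B = (\<chi> i j. pc (A $ i $ j) * mono [LX] + pc (B $ i $ j) * mono [LY])"

definition Psi :: "complex^'n^'n \<Rightarrow> complex^'n^'n \<Rightarrow> ('n::finite) mps" where
  "Psi A B k = mpow (AXBY A B) k"

text \<open>F = beta^{delta,theta}_a (a Psi), coefficientwise and entrywise.\<close>
definition Fd :: "(letter list \<Rightarrow> complex) \<Rightarrow> letter \<Rightarrow> complex^'n^'n \<Rightarrow> complex^'n^'n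
    \<Rightarrow> nat \<Rightarrow> complex^'n^'n" where
  "Fd \<theta> a A B k = mapm (\<lambda>p. lin (bdelta \<theta> a) (mono [a] * p)) (Psi A B k)"

end

theory Submission imports Defs begin

lemma plus_NW: "NW u + NW v = NW (u @ v)"
  by (simp add: plus_nword_def)

lemma zero_NW: "(0::nword) = NW []"
  by (simp add: zero_nword_def)

lemma mono_mult: "mono u * mono v = mono (u @ v)"
  by (simp add: mono_def mult_single plus_NW)

lemma mono_Nil: "mono [] = 1"
  by (simp add: mono_def zero_NW[symmetric])

lemma pc_mult: "pc a * pc b = pc (a * b)"
  by (simp add: pc_def mult_single)

lemma pc_add: "pc (a + b) = pc a + pc b"
  by (simp add: pc_def single_add)

lemma pc_0[simp]: "pc 0 = 0"
  by (simp add: pc_def)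

lemma pc_1[simp]: "pc 1 = 1"
  by (simp add: pc_def)

lemma pc_diff: "pc (a - b) = pc a - pc b"
  by (simp add: pc_def single_diff)

lemma pc_uminus: "pc (- a) = - pc a"
  by (simp add: pc_def single_uminus)

lemma pc_sum: "pc (sum f S) = (\<Sum>x\<in>S. pc (f x))"
  by (induction S rule: infinite_finite_induct) (auto simp: pc_add)

lemma pc_mono: "pc c * mono w = Poly_Mapping.single (NW w) c"
  by (simp add: pc_def mono_def mult_single zero_NW plus_NW)

lemma poly_repr: "p = (\<Sum>k\<in>Poly_Mapping.keys p. Poly_Mapping.single k (Poly_Mapping.lookup p k))"
proof (rule poly_mapping_eqI)
  fix k0
  have "Poly_Mapping.lookup (\<Sum>k\<in>Poly_Mapping.keys p. Poly_Mapping.single k (Poly_Mapping.lookup p k)) k0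
     = (\<Sum>k\<in>Poly_Mapping.keys p. (if k = k0 then Poly_Mapping.lookup p k else 0))"
    by (simp only: lookup_sum lookup_single when_def)
  also have "\<dots> = (if k0 \<in> Poly_Mapping.keys p then Poly_Mapping.lookup p k0 else 0)"
    by (rule sum.delta) simp
  also have "\<dots> = Poly_Mapping.lookup p k0"
    by (simp add: in_keys_iff)
  finally show "Poly_Mapping.lookup p k0 = Poly_Mapping.lookup (\<Sum>k\<in>Poly_Mapping.keys p. Poly_Mapping.single k (Poly_Mapping.lookup p k)) k0" by simp
qed

lemma single_pc_central: "Poly_Mapping.single (0::nword) (c::complex) * Poly_Mapping.single k a = Poly_Mapping.single k a * Poly_Mapping.single 0 c"
  by (simp add: mult_single mult.commute[of c a])

lemma pc_central: "pc c * p = p * pc c"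
proof -
  define S where "S = (\<Sum>k\<in>Poly_Mapping.keys p. Poly_Mapping.single k (Poly_Mapping.lookup p k))"
  have rep: "p = S" unfolding S_def by (rule poly_repr)
  have "pc c * S = (\<Sum>k\<in>Poly_Mapping.keys p. pc c * Poly_Mapping.single k (Poly_Mapping.lookup p k))"
    unfolding S_def by (simp only: sum_distrib_left)
  also have "\<dots> = (\<Sum>k\<in>Poly_Mapping.keys p. Poly_Mapping.single k (Poly_Mapping.lookup p k) * pc c)"
    unfolding pc_def by (simp only: single_pc_central)
  also have "\<dots> = S * pc c"
    unfolding S_def by (simp only: sum_distrib_right)
  finally show ?thesis using rep by simp
qed

lemma lookup_pc_mult: "Poly_Mapping.lookup (pc c * p) k = c * Poly_Mapping.lookup p k"
  by (simp add: pc_def flip: mult_map_scale_conv_mult) (simp add: map.rep_eq when_def)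

lemma lin_superset:
  assumes "finite K" "Poly_Mapping.keys p \<subseteq> K"
  shows "lin f p = (\<Sum>w\<in>K. Poly_Mapping.lookup p w * f (word_of w))"
  unfolding lin_def
  by (rule sum.mono_neutral_left) (use assms in \<open>auto simp: in_keys_iff\<close>)

lemma linP_superset:
  assumes "finite K" "Poly_Mapping.keys p \<subseteq> K"
  shows "linP f p = (\<Sum>w\<in>K. pc (Poly_Mapping.lookup p w) * f (word_of w))"
  unfolding linP_def
  by (rule sum.mono_neutral_left) (use assms in \<open>auto simp: in_keys_iff\<close>)

lemma keys_add_sub: "Poly_Mapping.keys (p + q) \<subseteq> Poly_Mapping.keys p \<union> Poly_Mapping.keys q"
  by (rule keys_add)

lemma lin_add: "lin f (p + q) = lin f p + lin f q"
proof -
  let ?K = "Poly_Mapping.keys p \<union> Poly_Mapping.keys q"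
  have "lin f (p + q) = (\<Sum>w\<in>?K. Poly_Mapping.lookup (p+q) w * f (word_of w))"
    by (rule lin_superset) (auto simp: keys_add_sub)
  also have "\<dots> = (\<Sum>w\<in>?K. Poly_Mapping.lookup p w * f (word_of w)) + (\<Sum>w\<in>?K. Poly_Mapping.lookup q w * f (word_of w))"
    by (simp add: lookup_add distrib_right sum.distrib)
  also have "\<dots> = lin f p + lin f q"
    by (subst (1 2) lin_superset[of ?K]) auto
  finally show ?thesis .
qed

lemma linP_add: "linP f (p + q) = linP f p + linP f q"
proof -
  let ?K = "Poly_Mapping.keys p \<union> Poly_Mapping.keys q"
  have "linP f (p + q) = (\<Sum>w\<in>?K. pc (Poly_Mapping.lookup (p+q) w) * f (word_of w))"
    by (rule linP_superset) (auto simp: keys_add_sub)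
  also have "\<dots> = (\<Sum>w\<in>?K. pc (Poly_Mapping.lookup p w) * f (word_of w)) + (\<Sum>w\<in>?K. pc (Poly_Mapping.lookup q w) * f (word_of w))"
    by (simp add: lookup_add pc_add distrib_right sum.distrib)
  also have "\<dots> = linP f p + linP f q"
    by (subst (1 2) linP_superset[of ?K]) auto
  finally show ?thesis .
qed

lemma lin_zero[simp]: "lin f 0 = 0"
  by (simp add: lin_def)

lemma linP_zero[simp]: "linP f 0 = 0"
  by (simp add: linP_def)

lemma lin_scale: "lin f (pc c * p) = c * lin f p"
proof -
  have "lin f (pc c * p) = (\<Sum>w\<in>Poly_Mapping.keys p. Poly_Mapping.lookup (pc c * p) w * f (word_of w))"
    by (rule lin_superset) (auto simp: in_keys_iff lookup_pc_mult)
  also have "\<dots> = c * lin f p" unfolding lin_def by (simp add: lookup_pc_mult sum_distrib_left mult.assoc)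
  finally show ?thesis .
qed

lemma linP_scale: "linP f (pc c * p) = pc c * linP f p"
proof -
  have "linP f (pc c * p) = (\<Sum>w\<in>Poly_Mapping.keys p. pc (Poly_Mapping.lookup (pc c * p) w) * f (word_of w))"
    by (rule linP_superset) (auto simp: in_keys_iff lookup_pc_mult)
  also have "\<dots> = pc c * linP f p" unfolding linP_def by (simp add: lookup_pc_mult sum_distrib_left mult.assoc flip: pc_mult)
  finally show ?thesis .
qed

lemma lin_mono: "lin f (mono w) = f w"
  by (simp add: lin_def mono_def)

lemma linP_mono: "linP f (mono w) = f w"
  by (simp add: linP_def mono_def)

lemma lin_pc_mono: "lin f (pc c * mono w) = c * f w"
  by (simp add: lin_scale lin_mono)

lemma linP_pc_mono: "linP f (pc c * mono w) = pc c * f w"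
  by (simp add: linP_scale linP_mono)

lemma lin_pc: "lin f (pc c) = c * f []"
  using lin_pc_mono[of f c "[]"] by (simp add: mono_Nil)

lemma lin_sum: "lin f (sum g S) = (\<Sum>x\<in>S. lin f (g x))"
  by (induction S rule: infinite_finite_induct) (auto simp: lin_add)

lemma linP_sum: "linP f (sum g S) = (\<Sum>x\<in>S. linP f (g x))"
  by (induction S rule: infinite_finite_induct) (auto simp: linP_add)

lemma lin_uminus: "lin f (- p) = - lin f p"
  using lin_scale[of f "-1" p] by (simp add: pc_uminus)

lemma lin_diff: "lin f (p - q) = lin f p - lin f q"
  using lin_add[of f p "-q"] by (simp add: lin_uminus)

lemma linP_uminus: "linP f (- p) = - linP f p"
  using linP_scale[of f "-1" p] by (simp add: pc_uminus)

lemma linP_diff: "linP f (p - q) = linP f p - linP f q"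
  using linP_add[of f p "-q"] by (simp add: linP_uminus)

section \<open>Boolean cumulants via nested centerings\<close>

definition Qop :: "(letter list \<Rightarrow> complex) \<Rightarrow> ncpoly \<Rightarrow> ncpoly" where
  "Qop \<theta> p = p - pc (lin \<theta> p)"

fun TBr :: "(letter list \<Rightarrow> complex) \<Rightarrow> letter list list \<Rightarrow> ncpoly" where
  "TBr \<theta> [] = 1"
| "TBr \<theta> [u] = mono u"
| "TBr \<theta> (u # v # rs) = Qop \<theta> (TBr \<theta> (v # rs)) * mono u"

definition TB :: "(letter list \<Rightarrow> complex) \<Rightarrow> letter list list \<Rightarrow> ncpoly" where
  "TB \<theta> us = TBr \<theta> (rev us)"

lemma TB_single[simp]: "TB \<theta> [u] = mono u"
  by (simp add: TB_def)

lemma TB_snoc: "us \<noteq> [] \<Longrightarrow> TB \<theta> (us @ [u]) = Qop \<theta> (TB \<theta> us) * mono u"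
  by (cases "rev us") (auto simp: TB_def)

declare bcum.simps[simp del]

lemma bcum_rec: "bcum \<theta> us = \<theta> (concat us) - (\<Sum>k\<in>{1..<length us}. bcum \<theta> (take k us) * \<theta> (concat (drop k us)))"
  by (rule bcum.simps)

lemma TB_main:
  "us \<noteq> [] \<Longrightarrow> (\<forall>u. lin \<theta> (TB \<theta> us * mono u) = \<theta> (concat us @ u)
       - (\<Sum>k\<in>{1..<length us}. bcum \<theta> (take k us) * \<theta> (concat (drop k us) @ u)))
     \<and> bcum \<theta> us = lin \<theta> (TB \<theta> us)"
proof (induction us rule: rev_induct)
  case Nil
  then show ?case by simp
next
  case (snoc x us)
  show ?case
  proof (cases "us = []")
    case True
    then show ?thesis
      by (simp add: mono_mult lin_mono bcum_rec[of \<theta> "[x]"])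
  next
    case False
    with snoc.IH have IH1: "\<And>u. lin \<theta> (TB \<theta> us * mono u) = \<theta> (concat us @ u)
       - (\<Sum>k\<in>{1..<length us}. bcum \<theta> (take k us) * \<theta> (concat (drop k us) @ u))"
      and IH2: "bcum \<theta> us = lin \<theta> (TB \<theta> us)" by auto
    have A: "lin \<theta> (TB \<theta> (us @ [x]) * mono u) = \<theta> (concat (us @ [x]) @ u)
       - (\<Sum>k\<in>{1..<length (us @ [x])}. bcum \<theta> (take k (us @ [x])) * \<theta> (concat (drop k (us @ [x])) @ u))" for u
    proof -
      have "TB \<theta> (us @ [x]) * mono u = TB \<theta> us * mono (x @ u) - pc (lin \<theta> (TB \<theta> us)) * mono (x @ u)"
        using False by (simp add: TB_snoc Qop_def mult.assoc mono_mult left_diff_distrib)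
      then have "lin \<theta> (TB \<theta> (us @ [x]) * mono u) = lin \<theta> (TB \<theta> us * mono (x @ u)) - bcum \<theta> us * \<theta> (x @ u)"
        by (simp add: lin_diff lin_pc_mono IH2)
      also have "\<dots> = \<theta> (concat us @ x @ u)
       - (\<Sum>k\<in>{1..<length us}. bcum \<theta> (take k us) * \<theta> (concat (drop k us) @ x @ u)) - bcum \<theta> us * \<theta> (x @ u)"
        by (simp add: IH1)
      also have "(\<Sum>k\<in>{1..<length (us @ [x])}. bcum \<theta> (take k (us @ [x])) * \<theta> (concat (drop k (us @ [x])) @ u))
          = (\<Sum>k\<in>{1..<length us}. bcum \<theta> (take k us) * \<theta> (concat (drop k us) @ x @ u)) + bcum \<theta> us * \<theta> (x @ u)"
      proof -
        have "length us \<ge> 1" using False by (cases us) auto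
        then have "(\<Sum>k\<in>{1..<length (us @ [x])}. bcum \<theta> (take k (us @ [x])) * \<theta> (concat (drop k (us @ [x])) @ u))
          = (\<Sum>k\<in>{1..<length us}. bcum \<theta> (take k (us @ [x])) * \<theta> (concat (drop k (us @ [x])) @ u)) + bcum \<theta> us * \<theta> (x @ u)"
          using False by (simp add: sum.atLeastLessThan_Suc)
        also have "(\<Sum>k\<in>{1..<length us}. bcum \<theta> (take k (us @ [x])) * \<theta> (concat (drop k (us @ [x])) @ u))
            = (\<Sum>k\<in>{1..<length us}. bcum \<theta> (take k us) * \<theta> (concat (drop k us) @ x @ u))"
          by (rule sum.cong) auto
        finally show ?thesis .
      qed
      ultimately show ?thesis by simp
    qed
    have B: "bcum \<theta> (us @ [x]) = lin \<theta> (TB \<theta> (us @ [x]))"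
      using A[of "[]"] by (simp add: mono_Nil bcum_rec[of \<theta> "us @ [x]"])
    show ?thesis using A B by blast
  qed
qed

lemma bcum_TB: "us \<noteq> [] \<Longrightarrow> bcum \<theta> us = lin \<theta> (TB \<theta> us)"
  using TB_main by blast

lemma word_of_plus: "word_of (a + b) = word_of a @ word_of b"
  by (simp add: plus_nword_def)

lemma in_alg_add: "in_alg a p \<Longrightarrow> in_alg a q \<Longrightarrow> in_alg a (p + q)"
  unfolding in_alg_def
proof
  fix w assume "\<forall>w\<in>Poly_Mapping.keys p. set (word_of w) \<subseteq> {a}" "\<forall>w\<in>Poly_Mapping.keys q. set (word_of w) \<subseteq> {a}"
    and w: "w \<in> Poly_Mapping.keys (p + q)"
  moreover have "w \<in> Poly_Mapping.keys p \<or> w \<in> Poly_Mapping.keys q" using w keys_add[of p q] by auto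
  ultimately show "set (word_of w) \<subseteq> {a}" by auto
qed

lemma in_alg_diff: "in_alg a p \<Longrightarrow> in_alg a q \<Longrightarrow> in_alg a (p - q)"
  unfolding in_alg_def
proof
  fix w assume "\<forall>w\<in>Poly_Mapping.keys p. set (word_of w) \<subseteq> {a}" "\<forall>w\<in>Poly_Mapping.keys q. set (word_of w) \<subseteq> {a}"
    and w: "w \<in> Poly_Mapping.keys (p - q)"
  moreover have "w \<in> Poly_Mapping.keys p \<or> w \<in> Poly_Mapping.keys q" using w keys_diff[of p q] by auto
  ultimately show "set (word_of w) \<subseteq> {a}" by auto
qed

lemma in_alg_mult: "in_alg a p \<Longrightarrow> in_alg a q \<Longrightarrow> in_alg a (p * q)"
  unfolding in_alg_def
proof
  fix w assume A: "\<forall>w\<in>Poly_Mapping.keys p. set (word_of w) \<subseteq> {a}" "\<forall>w\<in>Poly_Mapping.keys q. set (word_of w) \<subseteq> {a}"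
    and w: "w \<in> Poly_Mapping.keys (p * q)"
  then obtain u v where "w = u + v" "u \<in> Poly_Mapping.keys p" "v \<in> Poly_Mapping.keys q"
    using keys_mult[of p q] by auto
  with A show "set (word_of w) \<subseteq> {a}" by (auto simp: word_of_plus)
qed

lemma in_alg_pc: "in_alg a (pc c)"
  unfolding in_alg_def pc_def by (auto simp: zero_NW)

lemma in_alg_mono: "set w \<subseteq> {a} \<Longrightarrow> in_alg a (mono w)"
  unfolding in_alg_def mono_def by auto

section \<open>Spans of alternating centered products\<close>

definition gen :: "(letter list \<Rightarrow> complex) \<Rightarrow> (letter list \<Rightarrow> complex) \<Rightarrow> letter \<Rightarrow> ncpoly list \<Rightarrow> letter list \<Rightarrow> bool" where
  "gen \<psi> \<theta> e us ls \<longleftrightarrow> us \<noteq> [] \<and> length us = length ls \<and> (\<forall>i. Suc i < length ls \<longrightarrow> ls ! i \<noteq> ls ! Suc i)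
     \<and> (\<forall>i<length us. in_alg (ls ! i) (us ! i)) \<and> hd ls = e \<and> lin \<theta> (hd us) = 0
     \<and> (\<forall>i. 0 < i \<and> i < length us \<longrightarrow> lin \<psi> (us ! i) = 0)"

inductive_set GS :: "(letter list \<Rightarrow> complex) \<Rightarrow> (letter list \<Rightarrow> complex) \<Rightarrow> letter \<Rightarrow> ncpoly set"
  for \<psi> \<theta> e where
  GS0: "0 \<in> GS \<psi> \<theta> e"
| GSadd: "p \<in> GS \<psi> \<theta> e \<Longrightarrow> q \<in> GS \<psi> \<theta> e \<Longrightarrow> p + q \<in> GS \<psi> \<theta> e"
| GSsc: "p \<in> GS \<psi> \<theta> e \<Longrightarrow> pc a * p \<in> GS \<psi> \<theta> e"
| GSgen: "gen \<psi> \<theta> e us ls \<Longrightarrow> prod_list us \<in> GS \<psi> \<theta> e"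

lemma gen_snoc:
  assumes "gen \<psi> \<theta> e us ls" "last ls \<noteq> c" "in_alg c R" "lin \<psi> R = 0"
  shows "gen \<psi> \<theta> e (us @ [R]) (ls @ [c])"
proof -
  from assms(1) have ne: "us \<noteq> []" "ls \<noteq> []" and len: "length us = length ls" unfolding gen_def by auto
  have alt: "\<forall>i. Suc i < length (ls @ [c]) \<longrightarrow> (ls @ [c]) ! i \<noteq> (ls @ [c]) ! Suc i"
  proof (intro allI impI)
    fix i assume i: "Suc i < length (ls @ [c])"
    show "(ls @ [c]) ! i \<noteq> (ls @ [c]) ! Suc i"
    proof (cases "Suc i < length ls")
      case True then show ?thesis using assms(1) by (auto simp: gen_def nth_append)
    next
      case False
      then have "Suc i = length ls" using i by simp
      then have ii: "i = length ls - 1" by simp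
      have "(ls @ [c]) ! i = last ls" using ii ne by (simp add: nth_append last_conv_nth)
      moreover have "(ls @ [c]) ! Suc i = c" using \<open>Suc i = length ls\<close> by (simp add: nth_append)
      ultimately show ?thesis using assms(2) by simp
    qed
  qed
  show ?thesis
    using assms(1) assms(3,4) ne len alt unfolding gen_def
    by (auto simp: nth_append hd_append less_Suc_eq)
qed

lemma gen_butlast:
  assumes "gen \<psi> \<theta> e us ls" "length us \<ge> 2"
  shows "gen \<psi> \<theta> e (butlast us) (butlast ls)"
proof -
  from assms have ne: "us \<noteq> []" "ls \<noteq> []" and len: "length us = length ls" unfolding gen_def by auto
  have hb: "hd (butlast xs) = hd xs" if "length xs \<ge> 2" for xs :: "'a list"
    using that by (cases xs) (auto simp: hd_append)
  have "butlast us \<noteq> []" using assms(2) by (cases us) auto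
  then show ?thesis
    using assms(1) assms(2) len hb[of us] hb[of ls] unfolding gen_def
    by (auto simp: nth_butlast)
qed

lemma gen_replace_last:
  assumes "gen \<psi> \<theta> e us ls" "length us \<ge> 2" "in_alg (last ls) R" "lin \<psi> R = 0"
  shows "gen \<psi> \<theta> e (butlast us @ [R]) ls"
proof -
  from assms have ne: "us \<noteq> []" "ls \<noteq> []" and len: "length us = length ls" unfolding gen_def by auto
  have hb: "hd (butlast us @ [R]) = hd us"
    using assms(2) by (cases us) (auto simp: hd_append)
  have inalg: "\<forall>i<length (butlast us @ [R]). in_alg (ls ! i) ((butlast us @ [R]) ! i)"
  proof (intro allI impI)
    fix i assume "i < length (butlast us @ [R])"
    then have "i < length us" using ne by simp
    show "in_alg (ls ! i) ((butlast us @ [R]) ! i)"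
    proof (cases "i < length us - 1")
      case True then show ?thesis using assms(1) len ne by (auto simp: gen_def nth_append nth_butlast)
    next
      case False
      then have "i = length us - 1" using \<open>i < length us\<close> by simp
      then show ?thesis using assms(3) len ne by (simp add: nth_append last_conv_nth)
    qed
  qed
  have cen: "\<forall>i. 0 < i \<and> i < length (butlast us @ [R]) \<longrightarrow> lin \<psi> ((butlast us @ [R]) ! i) = 0"
  proof (intro allI impI)
    fix i assume i: "0 < i \<and> i < length (butlast us @ [R])"
    then have "i < length us" using ne by simp
    then show "lin \<psi> ((butlast us @ [R]) ! i) = 0"
      using assms(1,4) i ne by (cases "i < length us - 1") (auto simp: gen_def nth_append nth_butlast)
  qed
  show ?thesis
    using assms(1) ne len hb inalg cen unfolding gen_def by auto
qed

lemma gen_single: "in_alg c R \<Longrightarrow> lin \<theta> R = 0 \<Longrightarrow> gen \<psi> \<theta> c [R] [c]"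
  unfolding gen_def by auto

lemma lin_pc1: "\<theta> [] = 1 \<Longrightarrow> lin \<theta> (pc a) = a"
  by (simp add: lin_pc)

lemma GS_rmult:
  assumes psi1: "\<psi> [] = 1" and th1: "\<theta> [] = 1" and "p \<in> GS \<psi> \<theta> e"
  shows "\<exists>a q. p * mono [c] = pc a + q \<and> q \<in> GS \<psi> \<theta> e \<and> (c \<noteq> e \<longrightarrow> a = 0)"
  using assms(3)
proof (induction rule: GS.induct)
  case GS0
  show ?case by (-, rule exI[of _ 0], rule exI[of _ 0]) (auto intro: GS.intros)
next
  case (GSadd p q)
  then obtain a1 q1 a2 q2 where h: "p * mono [c] = pc a1 + q1" "q1 \<in> GS \<psi> \<theta> e" "c \<noteq> e \<longrightarrow> a1 = 0"
    "q * mono [c] = pc a2 + q2" "q2 \<in> GS \<psi> \<theta> e" "c \<noteq> e \<longrightarrow> a2 = 0" by blast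
  have "(p + q) * mono [c] = pc (a1 + a2) + (q1 + q2)" using h by (simp add: distrib_right pc_add)
  moreover have "q1 + q2 \<in> GS \<psi> \<theta> e" using h by (auto intro: GS.intros)
  moreover have "c \<noteq> e \<longrightarrow> a1 + a2 = 0" using h by auto
  ultimately show ?case by blast
next
  case (GSsc p b)
  then obtain a1 q1 where h: "p * mono [c] = pc a1 + q1" "q1 \<in> GS \<psi> \<theta> e" "c \<noteq> e \<longrightarrow> a1 = 0" by blast
  have "pc b * p * mono [c] = pc (b * a1) + pc b * q1" using h by (simp add: mult.assoc distrib_left pc_mult)
  moreover have "pc b * q1 \<in> GS \<psi> \<theta> e" using h by (auto intro: GS.intros)
  moreover have "c \<noteq> e \<longrightarrow> b * a1 = 0" using h by auto
  ultimately show ?case by blast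
next
  case (GSgen us ls)
  then have ne: "us \<noteq> []" "ls \<noteq> []" and len: "length us = length ls" unfolding gen_def by auto
  have lastalg: "in_alg (last ls) (last us)"
    using GSgen ne len unfolding gen_def by (auto simp: last_conv_nth)
  show ?case
  proof (cases "last ls = c")
    case False
    define R where "R = mono [c] - pc (\<psi> [c])"
    have R1: "in_alg c R" unfolding R_def by (auto intro!: in_alg_diff in_alg_mono in_alg_pc)
    have R2: "lin \<psi> R = 0" unfolding R_def by (simp add: lin_diff lin_mono lin_pc psi1)
    have g: "gen \<psi> \<theta> e (us @ [R]) (ls @ [c])" by (rule gen_snoc[OF GSgen False R1 R2])
    have "prod_list us * mono [c] = prod_list (us @ [R]) + pc (\<psi> [c]) * prod_list us"
      by (simp add: R_def right_diff_distrib pc_central)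
    moreover have "prod_list (us @ [R]) + pc (\<psi> [c]) * prod_list us \<in> GS \<psi> \<theta> e"
      by (rule GS.GSadd[OF GS.GSgen[OF g] GS.GSsc[OF GS.GSgen[OF GSgen]]])
    ultimately show ?thesis by (metis add_0 pc_0)
  next
    case True
    show ?thesis
    proof (cases "length us \<ge> 2")
      case True2: True
      define R where "R = last us * mono [c] - pc (lin \<psi> (last us * mono [c]))"
      have R1: "in_alg (last ls) R" unfolding R_def using lastalg True
        by (auto intro!: in_alg_diff in_alg_mono in_alg_pc in_alg_mult)
      have R2: "lin \<psi> R = 0" unfolding R_def by (simp add: lin_diff lin_pc psi1)
      have g1: "gen \<psi> \<theta> e (butlast us @ [R]) ls" by (rule gen_replace_last[OF GSgen True2 R1 R2])
      have g2: "gen \<psi> \<theta> e (butlast us) (butlast ls)" by (rule gen_butlast[OF GSgen True2])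
      have "prod_list us = prod_list (butlast us) * last us"
        using ne by (metis append_butlast_last_id prod_list.append prod_list.Cons prod_list.Nil mult.right_neutral)
      then have "prod_list us * mono [c] = prod_list (butlast us @ [R]) + pc (lin \<psi> (last us * mono [c])) * prod_list (butlast us)"
        by (simp add: R_def mult.assoc right_diff_distrib pc_central)
      moreover have "prod_list (butlast us @ [R]) + pc (lin \<psi> (last us * mono [c])) * prod_list (butlast us) \<in> GS \<psi> \<theta> e"
        by (rule GS.GSadd[OF GS.GSgen[OF g1] GS.GSsc[OF GS.GSgen[OF g2]]])
      ultimately show ?thesis by (metis add_0 pc_0)
    next
      case False
      then have l1: "length us = 1" using ne by (cases us) (auto simp: Suc_le_eq)
      then obtain P where us: "us = [P]" by (cases us) (auto simp: length_Suc_conv)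
      obtain l where ls: "ls = [l]" using l1 len by (cases ls) (auto simp: length_Suc_conv)
      have lc: "l = c" using True ls by simp
      have le: "e = l" using GSgen ls unfolding gen_def by simp
      define R where "R = P * mono [c] - pc (lin \<theta> (P * mono [c]))"
      have Palg: "in_alg c P" using lastalg us ls lc by simp
      have R1: "in_alg c R" unfolding R_def using Palg
        by (auto intro!: in_alg_diff in_alg_mono in_alg_pc in_alg_mult)
      have R2: "lin \<theta> R = 0" unfolding R_def by (simp add: lin_diff lin_pc th1)
      have g: "gen \<psi> \<theta> c [R] [c]" by (rule gen_single[OF R1 R2])
      have "prod_list us * mono [c] = pc (lin \<theta> (P * mono [c])) + prod_list [R]"
        by (simp add: us R_def)
      moreover have "prod_list [R] \<in> GS \<psi> \<theta> e" using g le lc by (metis GS.GSgen)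
      ultimately show ?thesis using le lc by blast
    qed
  qed
qed

lemma cfreeD:
  assumes "cfree \<phi> \<psi>" "us \<noteq> []" "length us = length ls" "\<forall>i. Suc i < length ls \<longrightarrow> ls ! i \<noteq> ls ! Suc i"
    "\<forall>i<length us. in_alg (ls ! i) (us ! i) \<and> lin \<psi> (us ! i) = 0"
  shows "lin \<psi> (prod_list us) = 0 \<and> lin \<phi> (prod_list us) = (\<Prod>u\<leftarrow>us. lin \<phi> u)"
  using assms unfolding cfree_def by blast

lemma GS_van_psi:
  assumes "cfree \<phi> \<psi>" "p \<in> GS \<psi> \<psi> e"
  shows "lin \<psi> p = 0"
  using assms(2)
proof (induction rule: GS.induct)
  case GS0 then show ?case by simp
next
  case (GSadd p q) then show ?case by (simp add: lin_add)
next
  case (GSsc p a) then show ?case by (simp add: lin_scale)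
next
  case (GSgen us ls)
  have "\<forall>i<length us. in_alg (ls ! i) (us ! i) \<and> lin \<psi> (us ! i) = 0"
  proof (intro allI impI)
    fix i assume i: "i < length us"
    show "in_alg (ls ! i) (us ! i) \<and> lin \<psi> (us ! i) = 0"
    proof (cases i)
      case 0 then show ?thesis using GSgen i by (auto simp: gen_def hd_conv_nth)
    next
      case (Suc j) then show ?thesis using GSgen i by (auto simp: gen_def)
    qed
  qed
  then show ?case using cfreeD[OF assms(1), of us ls] GSgen by (auto simp: gen_def)
qed

lemma GS_van_phi:
  assumes cf: "cfree \<phi> \<psi>" and phi1: "\<phi> [] = 1" and psi1: "\<psi> [] = 1" and "p \<in> GS \<psi> \<phi> e"
  shows "lin \<phi> p = 0"
  using assms(4)
proof (induction rule: GS.induct)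
  case GS0 then show ?case by simp
next
  case (GSadd p q) then show ?case by (simp add: lin_add)
next
  case (GSsc p a) then show ?case by (simp add: lin_scale)
next
  case (GSgen us ls)
  obtain P rest where us: "us = P # rest" using GSgen by (cases us) (auto simp: gen_def)
  obtain l lrest where ls: "ls = l # lrest" using GSgen us by (cases ls) (auto simp: gen_def)
  have g: "gen \<psi> \<phi> e (P # rest) (l # lrest)" using GSgen us ls by simp
  have lenr: "length rest = length lrest" using g by (simp add: gen_def)
  have Pc: "lin \<phi> P = 0" and Palg: "in_alg l P" using g by (auto simp: gen_def)
  have altr: "\<forall>i. Suc i < length lrest \<longrightarrow> lrest ! i \<noteq> lrest ! Suc i"
  proof (intro allI impI)
    fix i assume "Suc i < length lrest"
    then show "lrest ! i \<noteq> lrest ! Suc i" using g[unfolded gen_def] by (metis Suc_less_eq length_Cons nth_Cons_Suc)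
  qed
  have restc: "\<forall>i<length rest. in_alg (lrest ! i) (rest ! i) \<and> lin \<psi> (rest ! i) = 0"
  proof (intro allI impI)
    fix i assume i: "i < length rest"
    have G: "\<forall>j<length (P # rest). in_alg ((l # lrest) ! j) ((P # rest) ! j)"
      and G2: "\<forall>j. 0 < j \<and> j < length (P # rest) \<longrightarrow> lin \<psi> ((P # rest) ! j) = 0"
      using g unfolding gen_def by blast+
    have "in_alg ((l # lrest) ! Suc i) ((P # rest) ! Suc i)" using G[rule_format, of "Suc i"] i by simp
    moreover have "lin \<psi> ((P # rest) ! Suc i) = 0" using G2[rule_format, of "Suc i"] i by simp
    ultimately have "in_alg ((l # lrest) ! Suc i) ((P # rest) ! Suc i)" "lin \<psi> ((P # rest) ! Suc i) = 0" .
    then show "in_alg (lrest ! i) (rest ! i) \<and> lin \<psi> (rest ! i) = 0" by simp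
  qed
  show ?case
  proof (cases "rest = []")
    case True
    then show ?thesis using us Pc by simp
  next
    case False
    define P' where "P' = P - pc (lin \<psi> P)"
    have P'c: "lin \<psi> P' = 0" unfolding P'_def by (simp add: lin_diff lin_pc psi1)
    have P'alg: "in_alg l P'" unfolding P'_def using Palg by (auto intro: in_alg_diff in_alg_pc)
    have P'phi: "lin \<phi> P' = - lin \<psi> P" unfolding P'_def by (simp add: lin_diff lin_pc phi1 Pc)
    have altf: "\<forall>i. Suc i < length (l # lrest) \<longrightarrow> (l # lrest) ! i \<noteq> (l # lrest) ! Suc i"
      using g unfolding gen_def by blast
    have c1: "\<forall>i<length (P' # rest). in_alg ((l # lrest) ! i) ((P' # rest) ! i) \<and> lin \<psi> ((P' # rest) ! i) = 0"
    proof (intro allI impI)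
      fix i assume i: "i < length (P' # rest)"
      show "in_alg ((l # lrest) ! i) ((P' # rest) ! i) \<and> lin \<psi> ((P' # rest) ! i) = 0"
      proof (cases i)
        case 0 then show ?thesis using P'c P'alg by simp
      next
        case (Suc j) then show ?thesis using restc i by simp
      qed
    qed
    have A: "lin \<phi> (prod_list (P' # rest)) = lin \<phi> P' * (\<Prod>u\<leftarrow>rest. lin \<phi> u)"
      using cfreeD[OF cf _ _ altf c1] lenr by simp
    have B: "lin \<phi> (prod_list rest) = (\<Prod>u\<leftarrow>rest. lin \<phi> u)"
      using cfreeD[OF cf False lenr altr restc] by simp
    have "prod_list us = prod_list (P' # rest) + pc (lin \<psi> P) * prod_list rest"
      unfolding us P'_def by (simp add: left_diff_distrib)
    then have "lin \<phi> (prod_list us) = lin \<phi> (prod_list (P' # rest)) + lin \<psi> P * lin \<phi> (prod_list rest)"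
      by (simp add: lin_add lin_scale)
    then show ?thesis using A B P'phi by simp
  qed
qed

section \<open>Vanishing of Boolean cumulants with different end letters\<close>

definition bs :: "(letter list \<Rightarrow> complex) \<Rightarrow> letter list \<Rightarrow> complex" where
  "bs \<theta> w = bcum \<theta> (map (\<lambda>x. [x]) w)"

lemma TB_repr:
  assumes psi1: "\<psi> [] = 1" and th1: "\<theta> [] = 1" and van: "\<And>e p. p \<in> GS \<psi> \<theta> e \<Longrightarrow> lin \<theta> p = 0"
  shows "w \<noteq> [] \<Longrightarrow> \<exists>a q. TB \<theta> (map (\<lambda>x. [x]) w) = pc a + q \<and> q \<in> GS \<psi> \<theta> (hd w)"
proof (induction w rule: rev_induct)
  case Nil then show ?case by simp
next
  case (snoc c w)
  show ?case
  proof (cases "w = []")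
    case True
    define R where "R = mono [c] - pc (\<theta> [c])"
    have R1: "in_alg c R" unfolding R_def by (auto intro!: in_alg_diff in_alg_mono in_alg_pc)
    have R2: "lin \<theta> R = 0" unfolding R_def by (simp add: lin_diff lin_mono lin_pc th1)
    have "prod_list [R] \<in> GS \<psi> \<theta> c" by (rule GS.GSgen[OF gen_single[OF R1 R2]])
    moreover have "TB \<theta> (map (\<lambda>x. [x]) (w @ [c])) = pc (\<theta> [c]) + prod_list [R]"
      using True by (simp add: R_def)
    ultimately show ?thesis using True by auto
  next
    case False
    then obtain a q where h: "TB \<theta> (map (\<lambda>x. [x]) w) = pc a + q" "q \<in> GS \<psi> \<theta> (hd w)" using snoc.IH by blast
    have "lin \<theta> (TB \<theta> (map (\<lambda>x. [x]) w)) = a" using h van[OF h(2)] by (simp add: lin_add lin_pc th1)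
    then have Q: "Qop \<theta> (TB \<theta> (map (\<lambda>x. [x]) w)) = q" using h by (simp add: Qop_def)
    obtain a' q' where h2: "q * mono [c] = pc a' + q'" "q' \<in> GS \<psi> \<theta> (hd w)"
      using GS_rmult[OF psi1 th1 h(2), of c] by blast
    have "TB \<theta> (map (\<lambda>x. [x]) (w @ [c])) = pc a' + q'"
      using False Q h2 by (simp add: TB_snoc)
    then show ?thesis using h2 False by auto
  qed
qed

lemma bs_van:
  assumes psi1: "\<psi> [] = 1" and th1: "\<theta> [] = 1" and van: "\<And>e p. p \<in> GS \<psi> \<theta> e \<Longrightarrow> lin \<theta> p = 0"
    and ne: "w \<noteq> []" and hl: "hd w \<noteq> last w"
  shows "bs \<theta> w = 0"
proof -
  obtain w' c where w: "w = w' @ [c]" using ne by (cases w rule: rev_cases) auto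
  have w'ne: "w' \<noteq> []" using w hl by auto
  have hc: "c \<noteq> hd w'" using hl w w'ne by auto
  obtain a q where h: "TB \<theta> (map (\<lambda>x. [x]) w') = pc a + q" "q \<in> GS \<psi> \<theta> (hd w')"
    using TB_repr[of \<psi> \<theta> w'] psi1 th1 van w'ne by blast
  have "lin \<theta> (TB \<theta> (map (\<lambda>x. [x]) w')) = a" using h van[OF h(2)] by (simp add: lin_add lin_pc th1)
  then have Q: "Qop \<theta> (TB \<theta> (map (\<lambda>x. [x]) w')) = q" using h by (simp add: Qop_def)
  obtain a' q' where h2: "q * mono [c] = pc a' + q'" "q' \<in> GS \<psi> \<theta> (hd w')" "c \<noteq> hd w' \<longrightarrow> a' = 0"
    using GS_rmult[OF psi1 th1 h(2), of c] by blast
  have "bs \<theta> w = lin \<theta> (TB \<theta> (map (\<lambda>x. [x]) w))"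
    unfolding bs_def using ne by (simp add: bcum_TB)
  also have "\<dots> = lin \<theta> (pc a' + q')" using w w'ne Q h2 by (simp add: TB_snoc)
  also have "\<dots> = 0" using h2 hc van[OF h2(2)] by (simp add: lin_add)
  finally show ?thesis .
qed

lemma blocks_struct: "w \<noteq> [] \<Longrightarrow> \<exists>u us. blocks w = u # us \<and> u \<noteq> [] \<and> hd u = hd w"
proof (induction w)
  case Nil then show ?case by simp
next
  case (Cons a w)
  show ?case
  proof (cases "w = []")
    case True then show ?thesis by simp
  next
    case False
    then obtain u us where h: "blocks w = u # us" "u \<noteq> []" "hd u = hd w" using Cons.IH by blast
    then have "blocks (a # w) = (if hd u = a then (a # u) # us else [a] # u # us)" by simp
    then show ?thesis
    proof (cases "hd u = a")
      case True
      then have "blocks (a # w) = (a # u) # us \<and> a # u \<noteq> [] \<and> hd (a # u) = hd (a # w)"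
        using \<open>blocks (a # w) = _\<close> by simp
      then show ?thesis by (intro exI)
    next
      case False
      then have "blocks (a # w) = [a] # (u # us) \<and> [a] \<noteq> [] \<and> hd [a] = hd (a # w)"
        using \<open>blocks (a # w) = _\<close> by simp
      then show ?thesis by (intro exI)
    qed
  qed
qed

lemma blocks_ne: "w \<noteq> [] \<Longrightarrow> blocks w \<noteq> []"
  by (cases w) (auto split: list.split)

lemma blocks_snoc:
  "w \<noteq> [] \<Longrightarrow> blocks (w @ [c]) = (if last w = c then butlast (blocks w) @ [last (blocks w) @ [c]] else blocks w @ [[c]])"
proof (induction w)
  case Nil then show ?case by simp
next
  case (Cons a w)
  show ?case
  proof (cases "w = []")
    case True then show ?thesis by auto
  next
    case False
    then obtain u us where B: "blocks w = u # us" "u \<noteq> []" "hd u = hd w" using blocks_struct by blast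
    have IH: "blocks (w @ [c]) = (if last w = c then butlast (u # us) @ [last (u # us) @ [c]] else (u # us) @ [[c]])"
      using Cons.IH False B by simp
    have hw: "hd (w @ [c]) = hd w" using False by simp
    show ?thesis
    proof (cases "last w = c")
      case True
      show ?thesis
      proof (cases "us = []")
        case True
        then show ?thesis using IH B False \<open>last w = c\<close> by (auto simp: hw)
      next
        case False
        then show ?thesis using IH B \<open>w \<noteq> []\<close> \<open>last w = c\<close> by (auto simp: hw)
      qed
    next
      case False
      then show ?thesis using IH B \<open>w \<noteq> []\<close> by (auto simp: hw)
    qed
  qed
qed

lemma blocks_pure: "w \<noteq> [] \<Longrightarrow> set w \<subseteq> {a} \<Longrightarrow> blocks w = [w]"
proof (induction w)
  case Nil then show ?case by simp
next
  case (Cons b w)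
  then show ?case by (cases w) auto
qed

fun TBBr :: "(letter list \<Rightarrow> complex) \<Rightarrow> letter list \<Rightarrow> ncpoly" where
  "TBBr \<theta> [] = 1"
| "TBBr \<theta> [c] = mono [c]"
| "TBBr \<theta> (c # d # rs) = (if d = c then TBBr \<theta> (d # rs) else Qop \<theta> (TBBr \<theta> (d # rs))) * mono [c]"

definition TBB :: "(letter list \<Rightarrow> complex) \<Rightarrow> letter list \<Rightarrow> ncpoly" where
  "TBB \<theta> w = TBBr \<theta> (rev w)"

lemma TBB_single[simp]: "TBB \<theta> [c] = mono [c]"
  by (simp add: TBB_def)

lemma TBB_snoc: "w \<noteq> [] \<Longrightarrow> TBB \<theta> (w @ [c]) = (if last w = c then TBB \<theta> w else Qop \<theta> (TBB \<theta> w)) * mono [c]"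
  by (cases "rev w") (auto simp: TBB_def last_rev[symmetric] simp del: last_rev dest: arg_cong[of _ _ hd])

lemma TB_snoc_app: "TB \<theta> (vs @ [u @ [c]]) = TB \<theta> (vs @ [u]) * mono [c]"
  by (cases "vs = []") (auto simp: TB_snoc mono_mult mult.assoc)

lemma TB_blocks: "w \<noteq> [] \<Longrightarrow> TB \<theta> (blocks w) = TBB \<theta> w"
proof (induction w rule: rev_induct)
  case Nil then show ?case by simp
next
  case (snoc c w)
  show ?case
  proof (cases "w = []")
    case True then show ?thesis by simp
  next
    case False
    have Bne: "blocks w \<noteq> []" using blocks_ne[OF False] .
    show ?thesis
    proof (cases "last w = c")
      case True
      have "TB \<theta> (blocks (w @ [c])) = TB \<theta> (butlast (blocks w) @ [last (blocks w)]) * mono [c]"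
        using False True by (simp add: blocks_snoc TB_snoc_app)
      also have "\<dots> = TBB \<theta> w * mono [c]" using Bne snoc.IH False by simp
      finally show ?thesis using False True by (simp add: TBB_snoc)
    next
      case nc: False
      then show ?thesis using False Bne snoc.IH by (simp add: blocks_snoc TB_snoc TBB_snoc)
    qed
  qed
qed

lemma Qop_add: "Qop \<theta> (p + q) = Qop \<theta> p + Qop \<theta> q"
  by (simp add: Qop_def lin_add pc_add algebra_simps)

lemma Qop_scale: "Qop \<theta> (pc a * p) = pc a * Qop \<theta> p"
  by (simp add: Qop_def lin_scale pc_mult right_diff_distrib)

lemma Qop_zero: "Qop \<theta> 0 = 0"
  by (simp add: Qop_def)

lemma Qop_sum: "Qop \<theta> (sum f S) = (\<Sum>x\<in>S. Qop \<theta> (f x))"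
  by (induction S rule: infinite_finite_induct) (auto simp: Qop_add Qop_zero)

definition Sgap :: "letter list \<Rightarrow> nat set" where
  "Sgap w = {j\<in>{1..<length w}. w ! (j - 1) = w ! j}"

lemma Sgap_snoc:
  assumes "w \<noteq> []"
  shows "Sgap (w @ [c]) = (if last w = c then insert (length w) (Sgap w) else Sgap w)"
proof -
  have "j \<in> Sgap (w @ [c]) \<longleftrightarrow> j \<in> (if last w = c then insert (length w) (Sgap w) else Sgap w)" for j
  proof (cases "j < length w")
    case True
    then show ?thesis by (auto simp: Sgap_def nth_append)
  next
    case False
    then show ?thesis using assms by (cases "j = length w") (auto simp: Sgap_def nth_append last_conv_nth Suc_le_eq)
  qed
  then show ?thesis by blast
qed

lemma Sgap_fin: "finite (Sgap w)"
  by (simp add: Sgap_def)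

lemma len_notin_Sgap: "length w \<notin> Sgap w"
  by (simp add: Sgap_def)

lemma bs_TB: "w \<noteq> [] \<Longrightarrow> bs \<theta> w = lin \<theta> (TB \<theta> (map (\<lambda>x. [x]) w))"
  unfolding bs_def by (simp add: bcum_TB)

lemma TBB_expand:
  "w \<noteq> [] \<Longrightarrow> TBB \<theta> w = TB \<theta> (map (\<lambda>x. [x]) w)
     + (\<Sum>j\<in>Sgap w. pc (bs \<theta> (take j w)) * TBB \<theta> (drop j w))"
proof (induction w rule: rev_induct)
  case Nil then show ?case by simp
next
  case (snoc c w)
  show ?case
  proof (cases "w = []")
    case True then show ?thesis by (simp add: Sgap_def)
  next
    case False
    have IH: "TBB \<theta> w = TB \<theta> (map (\<lambda>x. [x]) w) + (\<Sum>j\<in>Sgap w. pc (bs \<theta> (take j w)) * TBB \<theta> (drop j w))"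
      using snoc.IH False by simp
    have mw: "map (\<lambda>x. [x]) w \<noteq> []" using False by simp
    have drop_ne: "\<And>j. j \<in> Sgap w \<Longrightarrow> drop j w \<noteq> [] \<and> last (drop j w) = last w"
      by (auto simp: Sgap_def)
    have tk: "\<And>j. j \<in> Sgap w \<Longrightarrow> take j (w @ [c]) = take j w \<and> drop j (w @ [c]) = drop j w @ [c]"
      by (auto simp: Sgap_def)
    have TBsn: "TB \<theta> (map (\<lambda>x. [x]) (w @ [c])) = Qop \<theta> (TB \<theta> (map (\<lambda>x. [x]) w)) * mono [c]"
      using mw by (simp add: TB_snoc)
    show ?thesis
    proof (cases "last w = c")
      case True
      have sum_eq: "(\<Sum>j\<in>Sgap (w @ [c]). pc (bs \<theta> (take j (w @ [c]))) * TBB \<theta> (drop j (w @ [c])))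
          = (\<Sum>j\<in>Sgap w. pc (bs \<theta> (take j w)) * TBB \<theta> (drop j w)) * mono [c] + pc (bs \<theta> w) * mono [c]"
      proof -
        have "(\<Sum>j\<in>Sgap (w @ [c]). pc (bs \<theta> (take j (w @ [c]))) * TBB \<theta> (drop j (w @ [c])))
          = pc (bs \<theta> w) * mono [c] + (\<Sum>j\<in>Sgap w. pc (bs \<theta> (take j (w @ [c]))) * TBB \<theta> (drop j (w @ [c])))"
          using False True by (simp add: Sgap_snoc Sgap_fin len_notin_Sgap)
        also have "(\<Sum>j\<in>Sgap w. pc (bs \<theta> (take j (w @ [c]))) * TBB \<theta> (drop j (w @ [c])))
            = (\<Sum>j\<in>Sgap w. pc (bs \<theta> (take j w)) * TBB \<theta> (drop j w) * mono [c])"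
          by (rule sum.cong) (use tk drop_ne True in \<open>auto simp: TBB_snoc mult.assoc\<close>)
        finally show ?thesis by (simp add: sum_distrib_right add.commute)
      qed
      have "TBB \<theta> (w @ [c]) = TBB \<theta> w * mono [c]" using False True by (simp add: TBB_snoc)
      also have "\<dots> = TB \<theta> (map (\<lambda>x. [x]) w) * mono [c] + (\<Sum>j\<in>Sgap w. pc (bs \<theta> (take j w)) * TBB \<theta> (drop j w)) * mono [c]"
        by (simp add: IH distrib_right)
      also have "TB \<theta> (map (\<lambda>x. [x]) w) * mono [c] = TB \<theta> (map (\<lambda>x. [x]) (w @ [c])) + pc (bs \<theta> w) * mono [c]"
        using TBsn False by (simp add: Qop_def left_diff_distrib bs_TB)
      finally show ?thesis using sum_eq by (simp add: add.assoc)
    next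
      case nc: False
      have sum_eq: "(\<Sum>j\<in>Sgap (w @ [c]). pc (bs \<theta> (take j (w @ [c]))) * TBB \<theta> (drop j (w @ [c])))
          = (\<Sum>j\<in>Sgap w. pc (bs \<theta> (take j w)) * Qop \<theta> (TBB \<theta> (drop j w)) * mono [c])"
      proof -
        have "(\<Sum>j\<in>Sgap (w @ [c]). pc (bs \<theta> (take j (w @ [c]))) * TBB \<theta> (drop j (w @ [c])))
          = (\<Sum>j\<in>Sgap w. pc (bs \<theta> (take j (w @ [c]))) * TBB \<theta> (drop j (w @ [c])))"
          using False nc by (simp add: Sgap_snoc)
        also have "\<dots> = (\<Sum>j\<in>Sgap w. pc (bs \<theta> (take j w)) * Qop \<theta> (TBB \<theta> (drop j w)) * mono [c])"
          by (rule sum.cong) (use tk drop_ne nc in \<open>auto simp: TBB_snoc mult.assoc\<close>)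
        finally show ?thesis .
      qed
      have "TBB \<theta> (w @ [c]) = Qop \<theta> (TBB \<theta> w) * mono [c]" using False nc by (simp add: TBB_snoc)
      also have "\<dots> = Qop \<theta> (TB \<theta> (map (\<lambda>x. [x]) w)) * mono [c]
          + (\<Sum>j\<in>Sgap w. pc (bs \<theta> (take j w)) * Qop \<theta> (TBB \<theta> (drop j w)) * mono [c])"
        by (simp add: IH Qop_add Qop_sum Qop_scale distrib_right sum_distrib_right)
      finally show ?thesis using sum_eq TBsn by simp
    qed
  qed
qed

lemma bcum_blocks_TBB: "d \<noteq> [] \<Longrightarrow> bcum \<theta> (blocks d) = lin \<theta> (TBB \<theta> d)"
  by (simp add: bcum_TB blocks_ne TB_blocks)

lemma Kprime:
  "w \<noteq> [] \<Longrightarrow> bcum \<theta> (blocks w) = bs \<theta> w + (\<Sum>j\<in>Sgap w. bs \<theta> (take j w) * bcum \<theta> (blocks (drop j w)))"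
proof -
  assume ne: "w \<noteq> []"
  have dne: "\<And>j. j \<in> Sgap w \<Longrightarrow> drop j w \<noteq> []" by (auto simp: Sgap_def)
  have "bcum \<theta> (blocks w) = lin \<theta> (TBB \<theta> w)"
    using ne by (simp add: bcum_TB blocks_ne TB_blocks)
  also have "\<dots> = bs \<theta> w + (\<Sum>j\<in>Sgap w. bs \<theta> (take j w) * lin \<theta> (TBB \<theta> (drop j w)))"
    using ne by (simp add: TBB_expand[OF ne] lin_add lin_sum lin_scale bs_TB)
  also have "(\<Sum>j\<in>Sgap w. bs \<theta> (take j w) * lin \<theta> (TBB \<theta> (drop j w)))
      = (\<Sum>j\<in>Sgap w. bs \<theta> (take j w) * bcum \<theta> (blocks (drop j w)))"
    by (rule sum.cong[OF refl]) (simp add: bcum_blocks_TBB[OF dne])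
  finally show ?thesis .
qed

section \<open>Block cumulants in terms of singleton cumulants\<close>

lemma last_take_nth: "0 < j \<Longrightarrow> j \<le> length x \<Longrightarrow> last (take j x) = x ! (j - 1)"
proof -
  assume a: "0 < j" "j \<le> length x"
  then have "take j x \<noteq> []" by (cases x) auto
  then have "last (take j x) = take j x ! (length (take j x) - 1)" by (rule last_conv_nth)
  also have "\<dots> = x ! (j - 1)" using a by (simp add: min_def)
  finally show ?thesis .
qed

lemma hd_take_pos: "0 < j \<Longrightarrow> x \<noteq> [] \<Longrightarrow> hd (take j x) = hd x"
  by (cases x; cases j) auto

lemma hd_drop_nth: "j < length x \<Longrightarrow> hd (drop j x) = x ! j"
  by (simp add: hd_drop_conv_nth)

lemma Zlemma:
  assumes V: "\<And>w. w \<noteq> [] \<Longrightarrow> hd w \<noteq> last w \<Longrightarrow> bs \<theta> w = 0"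
  shows "x \<noteq> [] \<Longrightarrow> hd x \<noteq> last x \<Longrightarrow> bcum \<theta> (blocks x) = 0"
proof (induction "length x" arbitrary: x rule: less_induct)
  case less
  have "(\<Sum>j\<in>Sgap x. bs \<theta> (take j x) * bcum \<theta> (blocks (drop j x))) = 0"
  proof (rule sum.neutral, rule ballI)
    fix j assume j: "j \<in> Sgap x"
    then have j1: "0 < j" "j < length x" "x ! (j - 1) = x ! j" by (auto simp: Sgap_def)
    show "bs \<theta> (take j x) * bcum \<theta> (blocks (drop j x)) = 0"
    proof (cases "hd (take j x) = last (take j x)")
      case False
      have tj: "take j x \<noteq> []" using j1 by auto
      have "bs \<theta> (take j x) = 0" using V[OF tj False] .
      then show ?thesis by simp
    next
      case True
      then have "hd x = x ! j" using j1 less.prems by (simp add: hd_take_pos last_take_nth)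
      then have "hd (drop j x) \<noteq> last (drop j x)" using less.prems j1 by (simp add: hd_drop_nth)
      then have "bcum \<theta> (blocks (drop j x)) = 0" using less.hyps[of "drop j x"] j1 by simp
      then show ?thesis by simp
    qed
  qed
  then show ?case using Kprime[OF less.prems(1), of \<theta>] V[OF less.prems] by simp
qed

lemma bblock_eq:
  assumes V: "\<And>w. w \<noteq> [] \<Longrightarrow> hd w \<noteq> last w \<Longrightarrow> bs \<theta> w = 0"
  shows "y \<noteq> [] \<Longrightarrow> hd y = a \<Longrightarrow> bblock \<theta> a y = bcum \<theta> (blocks y)"
  unfolding bblock_def using Zlemma[OF V, of y] by auto

lemma bdelta_eq:
  assumes V: "\<And>w. w \<noteq> [] \<Longrightarrow> hd w \<noteq> last w \<Longrightarrow> bs \<theta> w = 0"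
  shows "y \<noteq> [] \<Longrightarrow> hd y = a \<Longrightarrow> bdelta \<theta> a y = bs \<theta> y"
  unfolding bdelta_def using V[of y] by (auto simp: bs_def)

lemma Klemma:
  assumes V: "\<And>w. w \<noteq> [] \<Longrightarrow> hd w \<noteq> last w \<Longrightarrow> bs \<theta> w = 0"
    and ne: "x \<noteq> []" and ha: "hd x = a"
  shows "bblock \<theta> a x = bdelta \<theta> a x + (\<Sum>k\<in>{k\<in>{1..<length x}. x ! k = a}. bdelta \<theta> a (take k x) * bblock \<theta> a (drop k x))"
proof -
  define t where "t j = bs \<theta> (take j x) * bcum \<theta> (blocks (drop j x))" for j
  define K where "K = {k\<in>{1..<length x}. x ! k = a}"
  have fS: "finite (Sgap x)" and fK: "finite K" by (auto simp: Sgap_def K_def)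
  have "(\<Sum>j\<in>Sgap x. t j) = (\<Sum>j\<in>Sgap x \<inter> K. t j)"
  proof (rule sum.mono_neutral_right[OF fS], blast, rule ballI)
    fix j assume j: "j \<in> Sgap x - Sgap x \<inter> K"
    then have j1: "0 < j" "j < length x" "x ! (j - 1) = x ! j" "x ! j \<noteq> a" by (auto simp: Sgap_def K_def)
    then have hl: "hd (take j x) \<noteq> last (take j x)" using ne ha by (simp add: hd_take_pos last_take_nth)
    have tj: "take j x \<noteq> []" using j1 by auto
    have "bs \<theta> (take j x) = 0" using V[OF tj hl] .
    then show "t j = 0" by (simp add: t_def)
  qed
  also have "\<dots> = (\<Sum>j\<in>K. t j)"
  proof (rule sum.mono_neutral_left[OF fK], blast, rule ballI)
    fix j assume j: "j \<in> K - Sgap x \<inter> K"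
    then have j1: "0 < j" "j < length x" "x ! (j - 1) \<noteq> x ! j" "x ! j = a" by (auto simp: Sgap_def K_def)
    then have hl: "hd (take j x) \<noteq> last (take j x)" using ne ha by (simp add: hd_take_pos last_take_nth)
    have tj: "take j x \<noteq> []" using j1 by auto
    have "bs \<theta> (take j x) = 0" using V[OF tj hl] .
    then show "t j = 0" by (simp add: t_def)
  qed
  also have "\<dots> = (\<Sum>k\<in>K. bdelta \<theta> a (take k x) * bblock \<theta> a (drop k x))"
  proof (rule sum.cong[OF refl])
    fix k assume k: "k \<in> K"
    then have k1: "0 < k" "k < length x" "x ! k = a" by (auto simp: K_def)
    have "bdelta \<theta> a (take k x) = bs \<theta> (take k x)"
      using bdelta_eq[OF V, of "take k x" a] k1 ne ha by (simp add: hd_take_pos)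
    moreover have "bblock \<theta> a (drop k x) = bcum \<theta> (blocks (drop k x))"
      using bblock_eq[OF V, of "drop k x" a] k1 by (simp add: hd_drop_nth)
    ultimately show "t k = bdelta \<theta> a (take k x) * bblock \<theta> a (drop k x)" by (simp add: t_def)
  qed
  finally have S: "(\<Sum>j\<in>Sgap x. t j) = (\<Sum>k\<in>K. bdelta \<theta> a (take k x) * bblock \<theta> a (drop k x))" .
  have "bblock \<theta> a x = bcum \<theta> (blocks x)" using bblock_eq[OF V ne ha] .
  also have "\<dots> = bs \<theta> x + (\<Sum>j\<in>Sgap x. t j)" unfolding t_def by (rule Kprime[OF ne])
  also have "bs \<theta> x = bdelta \<theta> a x" using bdelta_eq[OF V ne ha] by simp
  finally show ?thesis using S by (simp add: K_def)
qed

definition Cset :: "letter \<Rightarrow> letter list \<Rightarrow> nat set" where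
  "Cset a v = {k\<in>{1..length v}. k = length v \<or> v ! k \<noteq> a}"

lemma GENlemma:
  assumes V: "\<And>w. w \<noteq> [] \<Longrightarrow> hd w \<noteq> last w \<Longrightarrow> bs \<theta> w = 0"
    and Hyp: "\<And>v. v \<noteq> [] \<Longrightarrow> hd v = a \<Longrightarrow> f v = (\<Sum>k\<in>Cset a v. pc (bblock \<theta> a (take k v)) * f (drop k v))"
    and ne: "w \<noteq> []" and ha: "hd w = a"
  shows "f w = (\<Sum>k\<in>{1..length w}. pc (bdelta \<theta> a (take k w)) * f (drop k w))"
proof -
  define n where "n = length w"
  define K where "K = {k\<in>{1..<n}. w ! k = a}"
  define C where "C = Cset a w"
  define F where "F k = pc (bdelta \<theta> a (take k w)) * f (drop k w)" for k
  have fK: "finite K" and fC: "finite C" by (auto simp: K_def C_def Cset_def)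
  have split: "{1..n} = C \<union> K" and disj: "C \<inter> K = {}"
    by (auto simp: K_def C_def Cset_def n_def)
  have "(\<Sum>k\<in>{1..n}. F k) = (\<Sum>k\<in>C. F k) + (\<Sum>k\<in>K. F k)"
    unfolding split by (rule sum.union_disjoint[OF fC fK disj])
  also have "(\<Sum>k\<in>K. F k) = (\<Sum>k\<in>K. \<Sum>m\<in>{m. m \<in> C \<and> k < m}.
        pc (bdelta \<theta> a (take k w)) * pc (bblock \<theta> a (drop k (take m w))) * f (drop m w))"
  proof (rule sum.cong[OF refl])
    fix k assume k: "k \<in> K"
    then have k1: "0 < k" "k < n" "w ! k = a" by (auto simp: K_def)
    have dne: "drop k w \<noteq> []" "hd (drop k w) = a" using k1 by (auto simp: n_def hd_drop_nth)
    have "f (drop k w) = (\<Sum>j\<in>Cset a (drop k w). pc (bblock \<theta> a (take j (drop k w))) * f (drop j (drop k w)))"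
      using Hyp[OF dne] .
    also have "\<dots> = (\<Sum>m\<in>{m. m \<in> C \<and> k < m}. pc (bblock \<theta> a (drop k (take m w))) * f (drop m w))"
    proof (rule sum.reindex_bij_witness[where i = "\<lambda>m. m - k" and j = "\<lambda>j. j + k"])
      fix j assume "j \<in> Cset a (drop k w)"
      then show "j + k - k = j" by simp
    next
      fix j assume j: "j \<in> Cset a (drop k w)"
      then show "j + k \<in> {m. m \<in> C \<and> k < m}" using k1
        by (auto simp: Cset_def C_def n_def add.commute)
    next
      fix m assume m: "m \<in> {m. m \<in> C \<and> k < m}"
      then show "m - k + k = m" by simp
    next
      fix m assume m: "m \<in> {m. m \<in> C \<and> k < m}"
      then show "m - k \<in> Cset a (drop k w)" using k1
        by (auto simp: Cset_def C_def n_def)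
    next
      fix j assume j: "j \<in> Cset a (drop k w)"
      show "pc (bblock \<theta> a (drop k (take (j + k) w))) * f (drop (j + k) w)
          = pc (bblock \<theta> a (take j (drop k w))) * f (drop j (drop k w))"
        by (simp add: take_drop add.commute)
    qed
    finally show "F k = (\<Sum>m\<in>{m. m \<in> C \<and> k < m}.
        pc (bdelta \<theta> a (take k w)) * pc (bblock \<theta> a (drop k (take m w))) * f (drop m w))"
      by (simp add: F_def sum_distrib_left mult.assoc)
  qed
  also have "\<dots> = (\<Sum>m\<in>C. \<Sum>k\<in>{k. k \<in> K \<and> k < m}.
        pc (bdelta \<theta> a (take k w)) * pc (bblock \<theta> a (drop k (take m w))) * f (drop m w))"
    by (rule sum.swap_restrict[OF fK fC])
  finally have A: "(\<Sum>k\<in>{1..n}. F k) = (\<Sum>m\<in>C. F m + (\<Sum>k\<in>{k. k \<in> K \<and> k < m}.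
        pc (bdelta \<theta> a (take k w)) * pc (bblock \<theta> a (drop k (take m w))) * f (drop m w)))"
    by (simp add: sum.distrib)
  also have "\<dots> = (\<Sum>m\<in>C. pc (bblock \<theta> a (take m w)) * f (drop m w))"
  proof (rule sum.cong[OF refl])
    fix m assume m: "m \<in> C"
    then have m1: "0 < m" "m \<le> n" by (auto simp: C_def Cset_def n_def)
    have tne: "take m w \<noteq> []" "hd (take m w) = a" using m1 ne ha by (auto simp: hd_take_pos)
    have Kset: "{k\<in>{1..<length (take m w)}. take m w ! k = a} = {k. k \<in> K \<and> k < m}"
      using m1 by (auto simp: K_def n_def)
    have "bblock \<theta> a (take m w) = bdelta \<theta> a (take m w)
        + (\<Sum>k\<in>{k. k \<in> K \<and> k < m}. bdelta \<theta> a (take k w) * bblock \<theta> a (drop k (take m w)))"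
      using Klemma[OF V tne] Kset m1 by (simp add: min_def)
    then have "pc (bblock \<theta> a (take m w)) * f (drop m w) = F m
        + (\<Sum>k\<in>{k. k \<in> K \<and> k < m}. pc (bdelta \<theta> a (take k w)) * pc (bblock \<theta> a (drop k (take m w))) * f (drop m w))"
      by (simp add: F_def pc_add pc_sum pc_mult distrib_right sum_distrib_right)
    then show "F m + (\<Sum>k\<in>{k. k \<in> K \<and> k < m}.
        pc (bdelta \<theta> a (take k w)) * pc (bblock \<theta> a (drop k (take m w))) * f (drop m w))
        = pc (bblock \<theta> a (take m w)) * f (drop m w)" by simp
  qed
  also have "\<dots> = f w" using Hyp[OF ne ha] by (simp add: C_def)
  finally show ?thesis by (simp add: F_def n_def)
qed

declare Ephi.simps[simp del] parse_pairs.simps[simp del] Ggrp.simps[simp del]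

lemma letter_neq_LY: "x \<noteq> LY \<longleftrightarrow> x = LX" by (cases x) auto
lemma letter_neq_LX: "x \<noteq> LX \<longleftrightarrow> x = LY" by (cases x) auto

lemma Ephi_Nil: "Ephi \<phi> \<psi> [] = 1"
  by (simp add: Ephi.simps mono_Nil)

lemma pp_Nil: "parse_pairs [] = []"
  by (simp add: parse_pairs.simps)

lemma Ggrp_Nil: "Ggrp \<psi> [] = 1"
  by (simp add: Ggrp.simps)

lemma Epsi_Nil: "Epsi \<psi> [] = 1"
  by (simp add: Epsi_def pp_Nil Ggrp_Nil mono_Nil)

lemma Epsi_pureX: "set w \<subseteq> {LX} \<Longrightarrow> Epsi \<psi> w = mono w"
proof -
  assume a: "set w \<subseteq> {LX}"
  then have "takeWhile (\<lambda>c. c = LX) w = w" by (auto simp: takeWhile_eq_all_conv)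
  moreover have "dropWhile (\<lambda>c. c = LX) w = []" using a by (auto simp: dropWhile_eq_Nil_conv)
  ultimately show ?thesis unfolding Epsi_def by (simp only: pp_Nil Ggrp_Nil mult_1_right)
qed

lemma mono_Cons: "mono (a # t) = mono [a] * mono t"
  by (simp add: mono_mult)

lemma Epsi_Cons_X: "Epsi \<psi> (LX # w) = mono [LX] * Epsi \<psi> w"
  unfolding Epsi_def by (simp add: mult.assoc mono_Cons[of LX "takeWhile (\<lambda>c. c = LX) w"])

lemma Cset_pure: "v \<noteq> [] \<Longrightarrow> set v \<subseteq> {a} \<Longrightarrow> Cset a v = {length v}"
proof -
  assume a: "v \<noteq> []" "set v \<subseteq> {a}"
  have n: "k < length v \<Longrightarrow> v ! k = a" for k using a(2) nth_mem[of k v] by blast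
  have l: "1 \<le> length v" using a(1) by (cases v) auto
  show ?thesis unfolding Cset_def
  proof (rule set_eqI)
    fix k
    show "k \<in> {k \<in> {1..length v}. k = length v \<or> v ! k \<noteq> a} \<longleftrightarrow> k \<in> {length v}"
    proof
      assume k: "k \<in> {k \<in> {1..length v}. k = length v \<or> v ! k \<noteq> a}"
      show "k \<in> {length v}"
      proof (cases "k = length v")
        case False then have "k < length v" using k by auto
        then show ?thesis using n k by auto
      qed simp
    next
      assume "k \<in> {length v}" then show "k \<in> {k \<in> {1..length v}. k = length v \<or> v ! k \<noteq> a}" using l by auto
    qed
  qed
qed

lemma Cset_nonpure: "v \<noteq> [] \<Longrightarrow> Cset a v = insert (length v) {k\<in>{1..<length v}. v ! k \<noteq> a}"
  by (auto simp: Cset_def Suc_le_eq)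

lemma bblock_pure: "v \<noteq> [] \<Longrightarrow> set v \<subseteq> {a} \<Longrightarrow> bblock \<theta> a v = \<theta> v"
proof -
  assume a: "v \<noteq> []" "set v \<subseteq> {a}"
  then have "hd v = a" "last v = a" by (auto dest: hd_in_set last_in_set)
  moreover have "blocks v = [v]" using blocks_pure[OF a] .
  ultimately show ?thesis using a by (simp add: bblock_def bcum_rec[of \<theta> "[v]"])
qed

lemma Ephi_HypY:
  assumes ne: "v \<noteq> []" and h: "hd v = LY"
  shows "Ephi \<phi> \<psi> v = (\<Sum>k\<in>Cset LY v. pc (bblock \<phi> LY (take k v)) * Ephi \<phi> \<psi> (drop k v))"
proof -
  have nX: "\<not> set v \<subseteq> {LX}" using ne h by (cases v) auto
  show ?thesis
  proof (cases "set v \<subseteq> {LY}")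
    case True
    then have "Ephi \<phi> \<psi> v = pc (\<phi> v)" using nX by (simp add: Ephi.simps)
    then show ?thesis using True ne by (simp add: Cset_pure bblock_pure Ephi_Nil)
  next
    case False
    then have "Ephi \<phi> \<psi> v = pc (bblock \<phi> LY v)
       + (\<Sum>k\<in>{k\<in>{1..<length v}. v ! k = LX}. pc (bblock \<phi> LY (take k v)) * Ephi \<phi> \<psi> (drop k v))"
      using nX h by (subst Ephi.simps) simp
    then show ?thesis using ne by (simp add: Cset_nonpure letter_neq_LY Ephi_Nil)
  qed
qed

lemma Delta_HypX:
  assumes ne: "v \<noteq> []" and h: "hd v = LX"
  shows "Ephi \<phi> \<psi> v - Epsi \<psi> v = (\<Sum>k\<in>Cset LX v. pc (bblock \<phi> LX (take k v)) * (Ephi \<phi> \<psi> (drop k v) - Epsi \<psi> (drop k v)))"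
proof -
  have nY: "\<not> set v \<subseteq> {LY}" using ne h by (cases v) auto
  show ?thesis
  proof (cases "set v \<subseteq> {LX}")
    case True
    then have "Ephi \<phi> \<psi> v = mono v" by (simp add: Ephi.simps)
    then show ?thesis using True ne by (simp add: Cset_pure Ephi_Nil Epsi_Nil Epsi_pureX)
  next
    case False
    then have "Ephi \<phi> \<psi> v = Epsi \<psi> v
       + (\<Sum>k\<in>{k\<in>{1..<length v}. v ! k = LY}. pc (bblock \<phi> LX (take k v)) * (Ephi \<phi> \<psi> (drop k v) - Epsi \<psi> (drop k v)))"
      using nY h by (subst Ephi.simps) simp
    then show ?thesis using ne by (simp add: Cset_nonpure letter_neq_LX Ephi_Nil Epsi_Nil)
  qed
qed

lemma pp_cons: "w \<noteq> [] \<Longrightarrow> parse_pairs w = (takeWhile (\<lambda>c. c = LY) w, takeWhile (\<lambda>c. c = LX) (dropWhile (\<lambda>c. c = LY) w))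
   # parse_pairs (dropWhile (\<lambda>c. c = LX) (dropWhile (\<lambda>c. c = LY) w))"
  by (subst parse_pairs.simps) (simp add: Let_def)

lemma blocks_append: "u \<noteq> [] \<Longrightarrow> v \<noteq> [] \<Longrightarrow> last u \<noteq> hd v \<Longrightarrow> blocks (u @ v) = blocks u @ blocks v"
proof (induction u)
  case Nil then show ?case by simp
next
  case (Cons a u)
  show ?case
  proof (cases "u = []")
    case True
    obtain b bs where B: "blocks v = b # bs" "b \<noteq> []" "hd b = hd v" using blocks_struct[OF Cons.prems(2)] by blast
    then show ?thesis using True Cons.prems by simp
  next
    case False
    have IH: "blocks (u @ v) = blocks u @ blocks v" using Cons.IH[OF False Cons.prems(2)] Cons.prems(3) False by simp
    obtain b bs where B: "blocks u = b # bs" "b \<noteq> []" "hd b = hd u" using blocks_struct[OF False] by blast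
    show ?thesis using IH B by simp
  qed
qed

lemma gtok_single: "gtok [(y, x)] = [y]"
  by (simp add: gtok_def)

lemma gtok_cons: "qs \<noteq> [] \<Longrightarrow> gtok ((y, x) # qs) = y # x # gtok qs"
proof -
  assume "qs \<noteq> []"
  then obtain q qs' where "qs = q # qs'" by (cases qs) auto
  then show ?thesis by (cases q) (simp add: gtok_def)
qed

definition Dset :: "letter list \<Rightarrow> nat set" where
  "Dset w = {k\<in>{1..length w}. (k = length w \<or> w ! k = LX) \<and> w ! (k - 1) = LY}"

lemma GG:
  "w = [] \<or> hd w = LY \<Longrightarrow>
   (\<Sum>k\<in>{1..length (parse_pairs w)}. pc (g (gtok (take k (parse_pairs w)))) * mono (snd (last (take k (parse_pairs w))))
        * Ggrp \<psi> (drop k (parse_pairs w)))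
   = (\<Sum>k\<in>Dset w. pc (g (blocks (take k w))) * Epsi \<psi> (drop k w))"
proof (induction "length w" arbitrary: w g rule: less_induct)
  case less
  show ?case
  proof (cases "w = []")
    case True
    then show ?thesis by (simp add: pp_Nil Dset_def)
  next
    case False
    then have hw: "hd w = LY" using less.prems by simp
    define y where "y = takeWhile (\<lambda>c. c = LY) w"
    define r0 where "r0 = dropWhile (\<lambda>c. c = LY) w"
    define x where "x = takeWhile (\<lambda>c. c = LX) r0"
    define r where "r = dropWhile (\<lambda>c. c = LX) r0"
    have wr0: "w = y @ r0" unfolding y_def r0_def by simp
    have r0x: "r0 = x @ r" unfolding x_def r_def by simp
    have w: "w = y @ x @ r" using wr0 r0x by simp
    have yne: "y \<noteq> []" using False hw unfolding y_def by (cases w) auto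
    have ysetl: "set y \<subseteq> {LY}" unfolding y_def by (auto dest: set_takeWhileD)
    have xsetl: "set x \<subseteq> {LX}" unfolding x_def by (auto dest: set_takeWhileD)
    have yn: "\<And>i. i < length y \<Longrightarrow> y ! i = LY" using ysetl nth_mem by blast
    have xn: "\<And>i. i < length x \<Longrightarrow> x ! i = LX" using xsetl nth_mem by blast
    have hr0: "r0 \<noteq> [] \<Longrightarrow> hd r0 = LX" unfolding r0_def using hd_dropWhile[of "\<lambda>c. c = LY" w] letter_neq_LY by auto
    have hr: "r \<noteq> [] \<Longrightarrow> hd r = LY" unfolding r_def using hd_dropWhile[of "\<lambda>c. c = LX" r0] letter_neq_LX by auto
    have xne: "r \<noteq> [] \<Longrightarrow> x \<noteq> []"
    proof
      assume "r \<noteq> []" "x = []"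
      then have "r0 \<noteq> []" using r0x by simp
      then have "hd r0 = LX" by (rule hr0)
      then have "x \<noteq> []" unfolding x_def using \<open>r0 \<noteq> []\<close> by (cases r0) auto
      then show False using \<open>x = []\<close> by simp
    qed
    have lr: "length r < length w" using w yne by simp
    have ppw: "parse_pairs w = (y, x) # parse_pairs r"
      using False by (simp add: pp_cons y_def r0_def x_def r_def)
    define ps where "ps = parse_pairs r"
    have rcond: "r = [] \<or> hd r = LY" using hr by blast
    have IH: "(\<Sum>k\<in>{1..length ps}. pc (g (y # x # gtok (take k ps))) * mono (snd (last (take k ps))) * Ggrp \<psi> (drop k ps))
        = (\<Sum>k\<in>Dset r. pc (g (y # x # blocks (take k r))) * Epsi \<psi> (drop k r))"
      using less.hyps[OF lr rcond, of "\<lambda>ts. g (y # x # ts)"] by (simp add: ps_def)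
    have Ex: "Epsi \<psi> (x @ r) = mono x * Ggrp \<psi> ps"
    proof -
      have "takeWhile (\<lambda>c. c = LX) (x @ r) = x"
        using xsetl rcond by (cases r) (auto simp: takeWhile_append2 subset_iff)
      moreover have "dropWhile (\<lambda>c. c = LX) (x @ r) = r"
        using xsetl rcond by (cases r) (auto simp: dropWhile_append2 subset_iff)
      ultimately show ?thesis by (simp add: Epsi_def ps_def)
    qed
    have LHS: "(\<Sum>k\<in>{1..length (parse_pairs w)}. pc (g (gtok (take k (parse_pairs w)))) * mono (snd (last (take k (parse_pairs w))))
        * Ggrp \<psi> (drop k (parse_pairs w)))
      = pc (g [y]) * mono x * Ggrp \<psi> ps
        + (\<Sum>k\<in>{1..length ps}. pc (g (y # x # gtok (take k ps))) * mono (snd (last (take k ps))) * Ggrp \<psi> (drop k ps))"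
    proof -
      have s: "{1..length (parse_pairs w)} = insert 1 (Suc ` {1..length ps})"
        by (auto simp: ppw ps_def image_iff)
      have "(\<Sum>k\<in>{1..length (parse_pairs w)}. pc (g (gtok (take k (parse_pairs w)))) * mono (snd (last (take k (parse_pairs w))))
          * Ggrp \<psi> (drop k (parse_pairs w)))
        = pc (g (gtok (take 1 (parse_pairs w)))) * mono (snd (last (take 1 (parse_pairs w)))) * Ggrp \<psi> (drop 1 (parse_pairs w))
          + (\<Sum>k\<in>Suc ` {1..length ps}. pc (g (gtok (take k (parse_pairs w)))) * mono (snd (last (take k (parse_pairs w))))
          * Ggrp \<psi> (drop k (parse_pairs w)))"
        unfolding s by (rule sum.insert) auto
      also have "(\<Sum>k\<in>Suc ` {1..length ps}. pc (g (gtok (take k (parse_pairs w)))) * mono (snd (last (take k (parse_pairs w))))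
          * Ggrp \<psi> (drop k (parse_pairs w)))
        = (\<Sum>k\<in>{1..length ps}. pc (g (y # x # gtok (take k ps))) * mono (snd (last (take k ps))) * Ggrp \<psi> (drop k ps))"
      proof (subst sum.reindex, simp, rule sum.cong[OF refl])
        fix k assume k: "k \<in> {1..length ps}"
        then have tne: "take k ps \<noteq> []" by (cases ps) auto
        show "((\<lambda>k. pc (g (gtok (take k (parse_pairs w)))) * mono (snd (last (take k (parse_pairs w)))) * Ggrp \<psi> (drop k (parse_pairs w))) \<circ> Suc) k
          = pc (g (y # x # gtok (take k ps))) * mono (snd (last (take k ps))) * Ggrp \<psi> (drop k ps)"
          using tne by (simp add: ppw ps_def[symmetric] gtok_cons)
      qed
      finally show ?thesis by (simp add: ppw ps_def[symmetric] gtok_single)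
    qed
    have Dw: "Dset w = insert (length y) ((\<lambda>k. k + length y + length x) ` Dset r)"
    proof (rule set_eqI)
      fix k
      have wn: "\<And>i. i < length w \<Longrightarrow> w ! i = (if i < length y then LY else if i < length y + length x then LX else r ! (i - length y - length x))"
        using yn xn by (auto simp: w nth_append)
      have lw: "length w = length y + length x + length r" using w by simp
      show "k \<in> Dset w \<longleftrightarrow> k \<in> insert (length y) ((\<lambda>k. k + length y + length x) ` Dset r)"
      proof
        assume k: "k \<in> Dset w"
        then have k1: "1 \<le> k" "k \<le> length w" "k = length w \<or> w ! k = LX" "w ! (k - 1) = LY" by (auto simp: Dset_def)
        show "k \<in> insert (length y) ((\<lambda>k. k + length y + length x) ` Dset r)"
        proof (cases "k < length y")
          case True
          then have "w ! k = LY" "k \<noteq> length w" using wn[of k] lw by auto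
          then show ?thesis using k1 by simp
        next
          case False
          show ?thesis
          proof (cases "k = length y")
            case True then show ?thesis by simp
          next
            case False2: False
            show ?thesis
            proof (cases "k \<le> length y + length x")
              case True
              have a1: "k - 1 < length w" using k1 by simp
              have a2: "\<not> (k - 1 < length y)" using False False2 by simp
              have a3: "k - 1 < length y + length x" using True k1 by simp
              have "w ! (k - 1) = LX" using wn[OF a1] a2 a3 by simp
              then show ?thesis using k1 by simp
            next
              case False3: False
              define k' where "k' = k - length y - length x"
              have kk: "k = k' + length y + length x" "1 \<le> k'" "k' \<le> length r" using False3 k1 lw by (auto simp: k'_def)
              have "k' = length r \<or> r ! k' = LX"
              proof (cases "k = length w")
                case True then show ?thesis using kk lw by simp
              next
                case False
                then have "w ! k = LX" using k1 by simp
                then show ?thesis using wn[of k] False k1 kk by (auto split: if_splits)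
              qed
              moreover have "r ! (k' - 1) = LY" using wn[of "k - 1"] k1 kk by (auto split: if_splits)
              ultimately have "k' \<in> Dset r" using kk by (auto simp: Dset_def)
              then show ?thesis using kk by auto
            qed
          qed
        qed
      next
        assume k: "k \<in> insert (length y) ((\<lambda>k. k + length y + length x) ` Dset r)"
        show "k \<in> Dset w"
        proof (cases "k = length y")
          case True
          have "1 \<le> k" "k \<le> length w" using True yne lw by (auto simp: Suc_le_eq)
          moreover have "w ! (k - 1) = LY"
          proof -
            have p: "0 < length y" using yne by simp
            have "k - 1 < length w" using True lw p by linarith
            moreover have "k - 1 < length y" using True p by linarith
            ultimately have "k - 1 < length w" "k - 1 < length y" by auto
            then show ?thesis using wn by simp
          qed
          moreover have "k = length w \<or> w ! k = LX"
          proof (cases "r = []")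
            case True
            then have "x = [] \<or> x \<noteq> []" by simp
            then show ?thesis
            proof
              assume "x = []" then show ?thesis using True \<open>k = length y\<close> lw by simp
            next
              assume "x \<noteq> []" then show ?thesis using wn[of k] \<open>k = length y\<close> lw by auto
            qed
          next
            case False
            then have "x \<noteq> []" by (rule xne)
            then show ?thesis using wn[of k] \<open>k = length y\<close> lw by auto
          qed
          ultimately show ?thesis by (auto simp: Dset_def)
        next
          case False
          then obtain k' where kk: "k = k' + length y + length x" "k' \<in> Dset r" using k by auto
          then have k'1: "1 \<le> k'" "k' \<le> length r" "k' = length r \<or> r ! k' = LX" "r ! (k' - 1) = LY" by (auto simp: Dset_def)
          have "1 \<le> k" "k \<le> length w" using kk k'1 lw by auto
          moreover have "w ! (k - 1) = LY" using wn[of "k - 1"] kk k'1 lw by auto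
          moreover have "k = length w \<or> w ! k = LX"
          proof (cases "k' = length r")
            case True then show ?thesis using kk lw by simp
          next
            case False
            then have "k' < length r" using k'1(2) by simp
            then have "k < length w" "\<not> k < length y" "\<not> k < length y + length x" "k - length y - length x = k'"
              using kk lw by auto
            then have "w ! k = r ! k'" using wn by simp
            then show ?thesis using k'1(3) False by simp
          qed
          ultimately show ?thesis by (auto simp: Dset_def)
        qed
      qed
    qed
    have RHS: "(\<Sum>k\<in>Dset w. pc (g (blocks (take k w))) * Epsi \<psi> (drop k w))
        = pc (g [y]) * mono x * Ggrp \<psi> ps + (\<Sum>k\<in>Dset r. pc (g (y # x # blocks (take k r))) * Epsi \<psi> (drop k r))"
    proof -
      have fD: "finite (Dset r)" by (simp add: Dset_def)
      have notin: "length y \<notin> (\<lambda>k. k + length y + length x) ` Dset r" by (auto simp: Dset_def)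
      have "(\<Sum>k\<in>Dset w. pc (g (blocks (take k w))) * Epsi \<psi> (drop k w))
          = pc (g (blocks (take (length y) w))) * Epsi \<psi> (drop (length y) w)
            + (\<Sum>k\<in>(\<lambda>k. k + length y + length x) ` Dset r. pc (g (blocks (take k w))) * Epsi \<psi> (drop k w))"
        unfolding Dw using fD notin by (simp add: sum.insert)
      also have "pc (g (blocks (take (length y) w))) * Epsi \<psi> (drop (length y) w) = pc (g [y]) * mono x * Ggrp \<psi> ps"
        using blocks_pure[OF yne ysetl] Ex by (simp add: w mult.assoc)
      also have "(\<Sum>k\<in>(\<lambda>k. k + length y + length x) ` Dset r. pc (g (blocks (take k w))) * Epsi \<psi> (drop k w))
          = (\<Sum>k\<in>Dset r. pc (g (y # x # blocks (take k r))) * Epsi \<psi> (drop k r))"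
      proof (subst sum.reindex, simp add: inj_on_def, rule sum.cong[OF refl])
        fix k assume k: "k \<in> Dset r"
        then have k1: "1 \<le> k" "k \<le> length r" by (auto simp: Dset_def)
        then have rne: "r \<noteq> []" by auto
        then have xne': "x \<noteq> []" by (rule xne)
        have tkne: "take k r \<noteq> []" using k1 rne by (cases r) auto
        have htk: "hd (take k r) = LY" using k1 rne hr by (simp add: hd_take_pos)
        have lx: "last x = LX" using xne' xsetl by (auto dest: last_in_set)
        have ly: "last y = LY" using yne ysetl by (auto dest: last_in_set)
        have hx: "hd x = LX" using xne' xsetl by (auto dest: hd_in_set)
        have b1: "blocks (x @ take k r) = [x] @ blocks (take k r)"
          using blocks_append[OF xne' tkne] lx htk blocks_pure[OF xne' xsetl] by simp
        have b2: "blocks (y @ x @ take k r) = [y] @ blocks (x @ take k r)"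
          using blocks_append[of y "x @ take k r"] yne xne' ly hx blocks_pure[OF yne ysetl] by simp
        show "((\<lambda>k. pc (g (blocks (take k w))) * Epsi \<psi> (drop k w)) \<circ> (\<lambda>k. k + length y + length x)) k
            = pc (g (y # x # blocks (take k r))) * Epsi \<psi> (drop k r)"
          using b1 b2 by (simp add: w add.assoc)
      qed
      finally show ?thesis .
    qed
    show ?thesis using LHS RHS IH by simp
  qed
qed

lemma Epsi_HypY:
  assumes ne: "v \<noteq> []" and h: "hd v = LY"
  shows "Epsi \<psi> v = (\<Sum>k\<in>Cset LY v. pc (bblock \<psi> LY (take k v)) * Epsi \<psi> (drop k v))"
proof -
  obtain t where v: "v = LY # t" using ne h by (cases v) auto
  have "Epsi \<psi> v = Ggrp \<psi> (parse_pairs v)" by (simp add: Epsi_def v mono_Nil)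
  also have "\<dots> = (\<Sum>k\<in>{1..length (parse_pairs v)}. pc (bcum \<psi> (gtok (take k (parse_pairs v))))
        * mono (snd (last (take k (parse_pairs v)))) * Ggrp \<psi> (drop k (parse_pairs v)))"
    using ne by (subst Ggrp.simps) (simp add: pp_cons)
  also have "\<dots> = (\<Sum>k\<in>Dset v. pc (bcum \<psi> (blocks (take k v))) * Epsi \<psi> (drop k v))"
    by (rule GG) (simp add: h)
  also have "\<dots> = (\<Sum>k\<in>Dset v. pc (bblock \<psi> LY (take k v)) * Epsi \<psi> (drop k v))"
  proof (rule sum.cong[OF refl])
    fix k assume k: "k \<in> Dset v"
    then have k1: "1 \<le> k" "k \<le> length v" "v ! (k - 1) = LY" by (auto simp: Dset_def)
    have "take k v \<noteq> []" using k1 ne by (cases v) auto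
    moreover have "hd (take k v) = LY" using k1 ne h by (simp add: hd_take_pos)
    moreover have "last (take k v) = LY" using k1 by (simp add: last_take_nth)
    ultimately show "pc (bcum \<psi> (blocks (take k v))) * Epsi \<psi> (drop k v) = pc (bblock \<psi> LY (take k v)) * Epsi \<psi> (drop k v)"
      by (simp add: bblock_def)
  qed
  also have "\<dots> = (\<Sum>k\<in>Cset LY v. pc (bblock \<psi> LY (take k v)) * Epsi \<psi> (drop k v))"
  proof (rule sum.mono_neutral_left)
    show "finite (Cset LY v)" by (simp add: Cset_def)
    show "Dset v \<subseteq> Cset LY v" by (auto simp: Dset_def Cset_def)
    show "\<forall>k\<in>Cset LY v - Dset v. pc (bblock \<psi> LY (take k v)) * Epsi \<psi> (drop k v) = 0"
    proof
      fix k assume k: "k \<in> Cset LY v - Dset v"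
      then have k1: "1 \<le> k" "k \<le> length v" "k = length v \<or> v ! k \<noteq> LY" "v ! (k - 1) \<noteq> LY"
        by (auto simp: Dset_def Cset_def letter_neq_LY)
      have "last (take k v) \<noteq> LY" using k1 by (simp add: last_take_nth)
      moreover have "take k v \<noteq> []" using k1 ne by (cases v) auto
      ultimately show "pc (bblock \<psi> LY (take k v)) * Epsi \<psi> (drop k v) = 0" by (simp add: bblock_def)
    qed
  qed
  finally show ?thesis .
qed

definition dl :: "letter list \<Rightarrow> ncpoly" where
  "dl u = (if u = [] then 1 else 0)"

definition g1 :: "(letter list \<Rightarrow> complex) \<Rightarrow> letter list \<Rightarrow> ncpoly" where
  "g1 \<phi> u = (case u of [] \<Rightarrow> 0 | c # _ \<Rightarrow> pc (bdelta \<phi> c u))"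

definition g2 :: "(letter list \<Rightarrow> complex) \<Rightarrow> (letter list \<Rightarrow> complex) \<Rightarrow> letter list \<Rightarrow> ncpoly" where
  "g2 \<phi> \<psi> u = (case u of [] \<Rightarrow> 0 | c # _ \<Rightarrow> (if c = LX then pc (bdelta \<phi> LX u) else pc (bdelta \<psi> LY u)))"

definition f3 :: "(letter list \<Rightarrow> complex) \<Rightarrow> letter list \<Rightarrow> ncpoly" where
  "f3 \<psi> u = (if u = [LX] then mono [LX] else 0) + (case u of [] \<Rightarrow> 0 | c # _ \<Rightarrow> (if c = LY then pc (bdelta \<psi> LY u) else 0))"

definition conv :: "(letter list \<Rightarrow> ncpoly) \<Rightarrow> (letter list \<Rightarrow> ncpoly) \<Rightarrow> letter list \<Rightarrow> ncpoly" where
  "conv F G w = (\<Sum>j\<le>length w. F (take j w) * G (drop j w))"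

lemma conv_dl_minus:
  assumes "g [] = 0"
  shows "conv (\<lambda>u. dl u - g u) F w = F w - (\<Sum>j\<in>{1..length w}. g (take j w) * F (drop j w))"
proof -
  have s: "{..length w} = insert 0 {1..length w}" by auto
  have "conv (\<lambda>u. dl u - g u) F w = (dl [] - g []) * F w + (\<Sum>j\<in>{1..length w}. (dl (take j w) - g (take j w)) * F (drop j w))"
    unfolding conv_def s by (subst sum.insert) auto
  also have "(\<Sum>j\<in>{1..length w}. (dl (take j w) - g (take j w)) * F (drop j w)) = (\<Sum>j\<in>{1..length w}. - (g (take j w) * F (drop j w)))"
    by (rule sum.cong[OF refl]) (auto simp: dl_def)
  finally show ?thesis using assms by (simp add: dl_def sum_negf)
qed

context
  fixes \<phi> \<psi> :: "letter list \<Rightarrow> complex"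
  assumes cf: "cfree \<phi> \<psi>" and phi1: "\<phi> [] = 1" and psi1: "\<psi> [] = 1"
begin

lemma Vphi: "w \<noteq> [] \<Longrightarrow> hd w \<noteq> last w \<Longrightarrow> bs \<phi> w = 0"
  by (rule bs_van[of \<psi> \<phi>]) (auto intro: psi1 phi1 GS_van_phi[OF cf phi1 psi1])

lemma Vpsi: "w \<noteq> [] \<Longrightarrow> hd w \<noteq> last w \<Longrightarrow> bs \<psi> w = 0"
  by (rule bs_van[of \<psi> \<psi>]) (auto intro: psi1 GS_van_psi[OF cf])

lemma Ephi_GEN: "v \<noteq> [] \<Longrightarrow> hd v = LY \<Longrightarrow>
    Ephi \<phi> \<psi> v = (\<Sum>k\<in>{1..length v}. pc (bdelta \<phi> LY (take k v)) * Ephi \<phi> \<psi> (drop k v))"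
proof -
  have H: "\<And>v. v \<noteq> [] \<Longrightarrow> hd v = LY \<Longrightarrow> Ephi \<phi> \<psi> v = (\<Sum>k\<in>Cset LY v. pc (bblock \<phi> LY (take k v)) * Ephi \<phi> \<psi> (drop k v))"
    by (rule Ephi_HypY)
  show "v \<noteq> [] \<Longrightarrow> hd v = LY \<Longrightarrow> ?thesis" by (rule GENlemma[OF Vphi H])
qed

lemma Delta_GEN: "v \<noteq> [] \<Longrightarrow> hd v = LX \<Longrightarrow>
    Ephi \<phi> \<psi> v - Epsi \<psi> v = (\<Sum>k\<in>{1..length v}. pc (bdelta \<phi> LX (take k v)) * (Ephi \<phi> \<psi> (drop k v) - Epsi \<psi> (drop k v)))"
proof -
  define f where "f = (\<lambda>v. Ephi \<phi> \<psi> v - Epsi \<psi> v)"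
  have H: "\<And>v. v \<noteq> [] \<Longrightarrow> hd v = LX \<Longrightarrow> f v = (\<Sum>k\<in>Cset LX v. pc (bblock \<phi> LX (take k v)) * f (drop k v))"
    unfolding f_def by (rule Delta_HypX)
  have "v \<noteq> [] \<Longrightarrow> hd v = LX \<Longrightarrow> f v = (\<Sum>k\<in>{1..length v}. pc (bdelta \<phi> LX (take k v)) * f (drop k v))"
    by (rule GENlemma[OF Vphi H])
  then show "v \<noteq> [] \<Longrightarrow> hd v = LX \<Longrightarrow> ?thesis" unfolding f_def .
qed

lemma Epsi_GEN: "v \<noteq> [] \<Longrightarrow> hd v = LY \<Longrightarrow>
    Epsi \<psi> v = (\<Sum>k\<in>{1..length v}. pc (bdelta \<psi> LY (take k v)) * Epsi \<psi> (drop k v))"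
proof -
  have H: "\<And>v. v \<noteq> [] \<Longrightarrow> hd v = LY \<Longrightarrow> Epsi \<psi> v = (\<Sum>k\<in>Cset LY v. pc (bblock \<psi> LY (take k v)) * Epsi \<psi> (drop k v))"
    by (rule Epsi_HypY)
  show "v \<noteq> [] \<Longrightarrow> hd v = LY \<Longrightarrow> ?thesis" by (rule GENlemma[OF Vpsi H])
qed

lemma abel1: "(a::ncpoly) - b = s1 - s2 \<Longrightarrow> a - s1 = b - s2"
  by (simp add: algebra_simps)

lemma take_Cons_pos: "0 < j \<Longrightarrow> take j (c # t) = c # take (j - 1) t"
  by (cases j) auto

lemma W1: "conv (\<lambda>u. dl u - g1 \<phi> u) (Ephi \<phi> \<psi>) w = conv (\<lambda>u. dl u - g2 \<phi> \<psi> u) (Epsi \<psi>) w"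
proof (cases w)
  case Nil
  then show ?thesis by (simp add: conv_def dl_def g1_def g2_def Ephi_Nil Epsi_Nil)
next
  case (Cons c t)
  have g10: "g1 \<phi> [] = 0" and g20: "g2 \<phi> \<psi> [] = 0" by (simp_all add: g1_def g2_def)
  have tk: "\<And>j. j \<in> {1..length w} \<Longrightarrow> take j w \<noteq> [] \<and> hd (take j w) = c"
    using Cons by (auto simp: take_Cons_pos)
  show ?thesis
  proof (cases c)
    case LX
    have e1: "(\<Sum>j\<in>{1..length w}. g1 \<phi> (take j w) * Ephi \<phi> \<psi> (drop j w))
        = (\<Sum>j\<in>{1..length w}. pc (bdelta \<phi> LX (take j w)) * Ephi \<phi> \<psi> (drop j w))"
    proof (rule sum.cong[OF refl])
      fix j assume j: "j \<in> {1..length w}"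
      then obtain u where "take j w = LX # u" using tk[OF j] LX by (cases "take j w") auto
      then show "g1 \<phi> (take j w) * Ephi \<phi> \<psi> (drop j w) = pc (bdelta \<phi> LX (take j w)) * Ephi \<phi> \<psi> (drop j w)"
        by (simp add: g1_def)
    qed
    have e2: "(\<Sum>j\<in>{1..length w}. g2 \<phi> \<psi> (take j w) * Epsi \<psi> (drop j w))
        = (\<Sum>j\<in>{1..length w}. pc (bdelta \<phi> LX (take j w)) * Epsi \<psi> (drop j w))"
    proof (rule sum.cong[OF refl])
      fix j assume j: "j \<in> {1..length w}"
      then obtain u where "take j w = LX # u" using tk[OF j] LX by (cases "take j w") auto
      then show "g2 \<phi> \<psi> (take j w) * Epsi \<psi> (drop j w) = pc (bdelta \<phi> LX (take j w)) * Epsi \<psi> (drop j w)"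
        by (simp add: g2_def)
    qed
    have D: "Ephi \<phi> \<psi> w - Epsi \<psi> w = (\<Sum>k\<in>{1..length w}. pc (bdelta \<phi> LX (take k w)) * (Ephi \<phi> \<psi> (drop k w) - Epsi \<psi> (drop k w)))"
      using Delta_GEN[of w] Cons LX by simp
    show ?thesis
      unfolding conv_dl_minus[of "g1 \<phi>", OF g10] conv_dl_minus[of "g2 \<phi> \<psi>", OF g20] e1 e2
    proof (rule abel1)
      show "Ephi \<phi> \<psi> w - Epsi \<psi> w = (\<Sum>j = 1..length w. pc (bdelta \<phi> LX (take j w)) * Ephi \<phi> \<psi> (drop j w))
          - (\<Sum>j = 1..length w. pc (bdelta \<phi> LX (take j w)) * Epsi \<psi> (drop j w))"
        unfolding D by (simp only: right_diff_distrib sum_subtractf)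
    qed
  next
    case LY
    have e1: "(\<Sum>j\<in>{1..length w}. g1 \<phi> (take j w) * Ephi \<phi> \<psi> (drop j w))
        = (\<Sum>j\<in>{1..length w}. pc (bdelta \<phi> LY (take j w)) * Ephi \<phi> \<psi> (drop j w))"
    proof (rule sum.cong[OF refl])
      fix j assume j: "j \<in> {1..length w}"
      then obtain u where "take j w = LY # u" using tk[OF j] LY by (cases "take j w") auto
      then show "g1 \<phi> (take j w) * Ephi \<phi> \<psi> (drop j w) = pc (bdelta \<phi> LY (take j w)) * Ephi \<phi> \<psi> (drop j w)"
        by (simp add: g1_def)
    qed
    have e2: "(\<Sum>j\<in>{1..length w}. g2 \<phi> \<psi> (take j w) * Epsi \<psi> (drop j w))
        = (\<Sum>j\<in>{1..length w}. pc (bdelta \<psi> LY (take j w)) * Epsi \<psi> (drop j w))"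
    proof (rule sum.cong[OF refl])
      fix j assume j: "j \<in> {1..length w}"
      then obtain u where "take j w = LY # u" using tk[OF j] LY by (cases "take j w") auto
      then show "g2 \<phi> \<psi> (take j w) * Epsi \<psi> (drop j w) = pc (bdelta \<psi> LY (take j w)) * Epsi \<psi> (drop j w)"
        by (simp add: g2_def)
    qed
    have A: "Ephi \<phi> \<psi> w = (\<Sum>k\<in>{1..length w}. pc (bdelta \<phi> LY (take k w)) * Ephi \<phi> \<psi> (drop k w))"
      using Ephi_GEN[of w] Cons LY by simp
    have B: "Epsi \<psi> w = (\<Sum>k\<in>{1..length w}. pc (bdelta \<psi> LY (take k w)) * Epsi \<psi> (drop k w))"
      using Epsi_GEN[of w] Cons LY by simp
    show ?thesis
      unfolding conv_dl_minus[of "g1 \<phi>", OF g10] conv_dl_minus[of "g2 \<phi> \<psi>", OF g20] e1 e2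
      using A B by simp
  qed
qed

lemma W3: "conv (\<lambda>u. dl u - f3 \<psi> u) (Epsi \<psi>) w = dl w"
proof (cases w)
  case Nil
  then show ?thesis by (simp add: conv_def dl_def f3_def Epsi_Nil)
next
  case (Cons c t)
  have f30: "f3 \<psi> [] = 0" by (simp add: f3_def)
  have tk: "\<And>j. j \<in> {1..length w} \<Longrightarrow> take j w = c # take (j - 1) t"
    using Cons by (auto simp: take_Cons_pos)
  show ?thesis
  proof (cases c)
    case LX
    have e: "(\<Sum>j\<in>{1..length w}. f3 \<psi> (take j w) * Epsi \<psi> (drop j w))
        = (\<Sum>j\<in>{1..length w}. (if j = 1 then mono [LX] * Epsi \<psi> t else 0))"
    proof (rule sum.cong[OF refl])
      fix j assume j: "j \<in> {1..length w}"
      show "f3 \<psi> (take j w) * Epsi \<psi> (drop j w) = (if j = 1 then mono [LX] * Epsi \<psi> t else 0)"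
      proof (cases "j = 1")
        case True then show ?thesis using Cons LX by (simp add: f3_def)
      next
        case False
        then have "take (j - 1) t \<noteq> []" using j Cons by (cases t) auto
        then show ?thesis using tk[OF j] LX False by (simp add: f3_def)
      qed
    qed
    have "(\<Sum>j\<in>{1..length w}. (if j = 1 then mono [LX] * Epsi \<psi> t else 0)) = mono [LX] * Epsi \<psi> t"
      using Cons by (simp add: sum.delta Suc_le_eq)
    then show ?thesis
      unfolding conv_dl_minus[of "f3 \<psi>", OF f30] e using Cons LX by (simp add: Epsi_Cons_X dl_def)
  next
    case LY
    have e: "(\<Sum>j\<in>{1..length w}. f3 \<psi> (take j w) * Epsi \<psi> (drop j w))
        = (\<Sum>j\<in>{1..length w}. pc (bdelta \<psi> LY (take j w)) * Epsi \<psi> (drop j w))"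
    proof (rule sum.cong[OF refl])
      fix j assume j: "j \<in> {1..length w}"
      show "f3 \<psi> (take j w) * Epsi \<psi> (drop j w) = pc (bdelta \<psi> LY (take j w)) * Epsi \<psi> (drop j w)"
        using tk[OF j] LY by (simp add: f3_def)
    qed
    have B: "Epsi \<psi> w = (\<Sum>k\<in>{1..length w}. pc (bdelta \<psi> LY (take k w)) * Epsi \<psi> (drop k w))"
      using Epsi_GEN[of w] Cons LY by simp
    show ?thesis
      unfolding conv_dl_minus[of "f3 \<psi>", OF f30] e using B Cons by (simp add: dl_def)
  qed
qed

end

section \<open>Series over words\<close>

fun Mw :: "complex^'n::finite^'n \<Rightarrow> complex^'n^'n \<Rightarrow> letter list \<Rightarrow> complex^'n^'n" where
  "Mw A B [] = mat 1"
| "Mw A B (c # w) = (if c = LX then A else B) ** Mw A B w"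

definition Wd :: "nat \<Rightarrow> letter list set" where
  "Wd k = {w. length w = k}"

definition Ser :: "complex^'n::finite^'n \<Rightarrow> complex^'n^'n \<Rightarrow> (letter list \<Rightarrow> ncpoly) \<Rightarrow> nat \<Rightarrow> ncpoly^'n^'n" where
  "Ser A B f k = (\<chi> i j. \<Sum>w\<in>Wd k. pc (Mw A B w $ i $ j) * f w)"

lemma UNIV_letter: "(UNIV :: letter set) = {LX, LY}"
  using letter.exhaust by auto

lemma finite_Wd: "finite (Wd k)"
proof -
  have "Wd k = {xs. set xs \<subseteq> (UNIV :: letter set) \<and> length xs = k}" by (auto simp: Wd_def)
  then show ?thesis using finite_lists_length_eq[of "UNIV :: letter set" k] by (simp add: UNIV_letter)
qed

lemma Wd_0: "Wd 0 = {[]}"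
  by (auto simp: Wd_def)

lemma Wd_Suc_sum: "(\<Sum>v\<in>Wd (Suc k). F v) = (\<Sum>w\<in>Wd k. F (LX # w)) + (\<Sum>w\<in>Wd k. F (LY # w))"
proof -
  have e: "Wd (Suc k) = (Cons LX) ` Wd k \<union> (Cons LY) ` Wd k"
  proof (rule set_eqI)
    fix v show "v \<in> Wd (Suc k) \<longleftrightarrow> v \<in> (Cons LX) ` Wd k \<union> (Cons LY) ` Wd k"
    proof
      assume "v \<in> Wd (Suc k)"
      then obtain c t where v: "v = c # t" "length t = k" by (cases v) (auto simp: Wd_def)
      then show "v \<in> (Cons LX) ` Wd k \<union> (Cons LY) ` Wd k" by (cases c) (auto simp: Wd_def)
    qed (auto simp: Wd_def)
  qed
  have d: "(Cons LX) ` Wd k \<inter> (Cons LY) ` Wd k = {}" by auto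
  show ?thesis unfolding e
    by (subst sum.union_disjoint) (auto simp: finite_Wd d sum.reindex)
qed

lemma Mw_append: "Mw A B (u @ v) = Mw A B u ** Mw A B v"
  by (induction u) (auto simp: matrix_mul_assoc)

lemma pc_matmul: "pc ((C ** D) $ i $ j) = (\<Sum>l\<in>UNIV. pc (C $ i $ l) * pc (D $ l $ j))"
  by (simp add: matrix_matrix_mult_def pc_sum pc_mult)

lemma Psi_Ser: "Psi A B k = Ser A B mono k"
proof (induction k)
  case 0
  show ?case unfolding Psi_def Ser_def
    by (simp add: Wd_0 mono_Nil mat_def vec_eq_iff) 
next
  case (Suc k)
  have "Psi A B (Suc k) = AXBY A B ** Ser A B mono k" using Suc by (simp add: Psi_def)
  also have "\<dots> = Ser A B mono (Suc k)"
  proof -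
    have "(AXBY A B ** Ser A B mono k) $ i $ j = Ser A B mono (Suc k) $ i $ j" for i j
    proof -
      have "(AXBY A B ** Ser A B mono k) $ i $ j
          = (\<Sum>l\<in>UNIV. (pc (A $ i $ l) * mono [LX] + pc (B $ i $ l) * mono [LY]) * (\<Sum>w\<in>Wd k. pc (Mw A B w $ l $ j) * mono w))"
        by (simp add: matrix_matrix_mult_def AXBY_def Ser_def)
      also have "\<dots> = (\<Sum>l\<in>UNIV. \<Sum>w\<in>Wd k. pc (A $ i $ l) * pc (Mw A B w $ l $ j) * mono (LX # w)
                                            + pc (B $ i $ l) * pc (Mw A B w $ l $ j) * mono (LY # w))"
      proof (rule sum.cong[OF refl])
        fix l
        have "\<And>c w. mono [LX] * (pc c * mono w) = pc c * mono (LX # w)"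
          by (metis mult.assoc pc_central mono_mult append_Cons append_Nil)
        moreover have "\<And>c w. mono [LY] * (pc c * mono w) = pc c * mono (LY # w)"
          by (metis mult.assoc pc_central mono_mult append_Cons append_Nil)
        ultimately show "(pc (A $ i $ l) * mono [LX] + pc (B $ i $ l) * mono [LY]) * (\<Sum>w\<in>Wd k. pc (Mw A B w $ l $ j) * mono w)
            = (\<Sum>w\<in>Wd k. pc (A $ i $ l) * pc (Mw A B w $ l $ j) * mono (LX # w)
                                            + pc (B $ i $ l) * pc (Mw A B w $ l $ j) * mono (LY # w))"
          by (simp add: distrib_right sum_distrib_left sum.distrib mult.assoc)
      qed
      also have "\<dots> = (\<Sum>w\<in>Wd k. \<Sum>l\<in>UNIV. pc (A $ i $ l) * pc (Mw A B w $ l $ j) * mono (LX # w))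
                   + (\<Sum>w\<in>Wd k. \<Sum>l\<in>UNIV. pc (B $ i $ l) * pc (Mw A B w $ l $ j) * mono (LY # w))"
        by (simp add: sum.distrib sum.swap[of _ UNIV])
      also have "\<dots> = (\<Sum>w\<in>Wd k. pc ((A ** Mw A B w) $ i $ j) * mono (LX # w))
                   + (\<Sum>w\<in>Wd k. pc ((B ** Mw A B w) $ i $ j) * mono (LY # w))"
        by (simp add: pc_matmul sum_distrib_right)
      also have "\<dots> = Ser A B mono (Suc k) $ i $ j"
        unfolding Ser_def by (simp add: Wd_Suc_sum)
      finally show ?thesis .
    qed
    then show ?thesis by (simp add: vec_eq_iff)
  qed
  finally show ?case .
qed

lemma Wd_split:
  assumes "a \<le> k"
  shows "(\<Sum>w\<in>Wd k. G (take a w) (drop a w)) = (\<Sum>u\<in>Wd a. \<Sum>v\<in>Wd (k - a). G u v)"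
proof -
  have "(\<Sum>u\<in>Wd a. \<Sum>v\<in>Wd (k - a). G u v) = (\<Sum>p\<in>Wd a \<times> Wd (k - a). G (fst p) (snd p))"
    by (simp add: sum.cartesian_product split_def)
  also have "\<dots> = (\<Sum>w\<in>Wd k. G (take a w) (drop a w))"
  proof (rule sum.reindex_bij_witness[where i = "\<lambda>w. (take a w, drop a w)" and j = "\<lambda>p. fst p @ snd p"])
    fix p assume "p \<in> Wd a \<times> Wd (k - a)"
    then show "(take a (fst p @ snd p), drop a (fst p @ snd p)) = p" by (auto simp: Wd_def)
  next
    fix p assume "p \<in> Wd a \<times> Wd (k - a)"
    then show "fst p @ snd p \<in> Wd k" using assms by (auto simp: Wd_def)
  next
    fix w assume "w \<in> Wd k"
    then show "fst (take a w, drop a w) @ snd (take a w, drop a w) = w" by simp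
  next
    fix w assume "w \<in> Wd k"
    then show "(take a w, drop a w) \<in> Wd a \<times> Wd (k - a)" using assms by (auto simp: Wd_def)
  next
    fix p assume "p \<in> Wd a \<times> Wd (k - a)"
    then show "G (take a (fst p @ snd p)) (drop a (fst p @ snd p)) = G (fst p) (snd p)" by (auto simp: Wd_def)
  qed
  finally show ?thesis by simp
qed

lemma prodSer:
  "(Ser A B f a ** Ser A B h b) $ i $ j = (\<Sum>u\<in>Wd a. \<Sum>v\<in>Wd b. pc (Mw A B (u @ v) $ i $ j) * (f u * h v))"
proof -
  have "(Ser A B f a ** Ser A B h b) $ i $ j
      = (\<Sum>l\<in>UNIV. (\<Sum>u\<in>Wd a. pc (Mw A B u $ i $ l) * f u) * (\<Sum>v\<in>Wd b. pc (Mw A B v $ l $ j) * h v))"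
    by (simp add: matrix_matrix_mult_def Ser_def)
  also have "\<dots> = (\<Sum>l\<in>UNIV. \<Sum>u\<in>Wd a. \<Sum>v\<in>Wd b. pc (Mw A B u $ i $ l) * pc (Mw A B v $ l $ j) * (f u * h v))"
  proof (rule sum.cong[OF refl])
    fix l
    have "\<And>u v. pc (Mw A B u $ i $ l) * f u * (pc (Mw A B v $ l $ j) * h v) = pc (Mw A B u $ i $ l) * pc (Mw A B v $ l $ j) * (f u * h v)"
    proof -
      fix u v
      have eq: "f u * pc (Mw A B v $ l $ j) = pc (Mw A B v $ l $ j) * f u" by (rule pc_central[symmetric])
      have "pc (Mw A B u $ i $ l) * f u * (pc (Mw A B v $ l $ j) * h v) = pc (Mw A B u $ i $ l) * ((f u * pc (Mw A B v $ l $ j)) * h v)"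
        by (simp only: mult.assoc)
      also have "\<dots> = pc (Mw A B u $ i $ l) * ((pc (Mw A B v $ l $ j) * f u) * h v)" by (simp only: eq)
      also have "\<dots> = pc (Mw A B u $ i $ l) * pc (Mw A B v $ l $ j) * (f u * h v)" by (simp only: mult.assoc)
      finally show "pc (Mw A B u $ i $ l) * f u * (pc (Mw A B v $ l $ j) * h v) = pc (Mw A B u $ i $ l) * pc (Mw A B v $ l $ j) * (f u * h v)" .
    qed
    then show "(\<Sum>u\<in>Wd a. pc (Mw A B u $ i $ l) * f u) * (\<Sum>v\<in>Wd b. pc (Mw A B v $ l $ j) * h v)
        = (\<Sum>u\<in>Wd a. \<Sum>v\<in>Wd b. pc (Mw A B u $ i $ l) * pc (Mw A B v $ l $ j) * (f u * h v))"
      by (simp add: sum_product)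
  qed
  also have "\<dots> = (\<Sum>u\<in>Wd a. \<Sum>l\<in>UNIV. \<Sum>v\<in>Wd b. pc (Mw A B u $ i $ l) * pc (Mw A B v $ l $ j) * (f u * h v))"
    by (rule sum.swap)
  also have "\<dots> = (\<Sum>u\<in>Wd a. \<Sum>v\<in>Wd b. \<Sum>l\<in>UNIV. pc (Mw A B u $ i $ l) * pc (Mw A B v $ l $ j) * (f u * h v))"
    by (rule sum.cong[OF refl], rule sum.swap)
  also have "\<dots> = (\<Sum>u\<in>Wd a. \<Sum>v\<in>Wd b. pc (Mw A B (u @ v) $ i $ j) * (f u * h v))"
    by (simp add: Mw_append pc_matmul sum_distrib_right)
  finally show ?thesis .
qed

lemma Ser_mult: "smult (Ser A B f) (Ser A B h) k = Ser A B (conv f h) k"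
proof -
  have "smult (Ser A B f) (Ser A B h) k $ i $ j = Ser A B (conv f h) k $ i $ j" for i j
  proof -
    have "smult (Ser A B f) (Ser A B h) k $ i $ j = (\<Sum>a\<le>k. (Ser A B f a ** Ser A B h (k - a)) $ i $ j)"
      by (simp add: smult_def)
    also have "\<dots> = (\<Sum>a\<le>k. \<Sum>w\<in>Wd k. pc (Mw A B w $ i $ j) * (f (take a w) * h (drop a w)))"
    proof (rule sum.cong[OF refl])
      fix a assume a: "a \<in> {..k}"
      show "(Ser A B f a ** Ser A B h (k - a)) $ i $ j = (\<Sum>w\<in>Wd k. pc (Mw A B w $ i $ j) * (f (take a w) * h (drop a w)))"
        unfolding prodSer using Wd_split[of a k "\<lambda>u v. pc (Mw A B (u @ v) $ i $ j) * (f u * h v)"] a by simp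
    qed
    also have "\<dots> = (\<Sum>w\<in>Wd k. \<Sum>a\<le>k. pc (Mw A B w $ i $ j) * (f (take a w) * h (drop a w)))"
      by (rule sum.swap)
    also have "\<dots> = Ser A B (conv f h) k $ i $ j"
      unfolding Ser_def conv_def by (auto simp: Wd_def sum_distrib_left intro!: sum.cong)
    finally show ?thesis .
  qed
  then show ?thesis by (simp add: vec_eq_iff)
qed

lemma Ser_dl: "Ser A B dl k = sone k"
proof -
  have "Ser A B dl k $ i $ j = sone k $ i $ j" for i j
  proof (cases k)
    case 0
    then show ?thesis by (simp add: Ser_def Wd_0 dl_def sone_def mat_def)
  next
    case (Suc m)
    have "Ser A B dl k $ i $ j = (\<Sum>w\<in>Wd k. pc (Mw A B w $ i $ j) * dl w)" by (simp add: Ser_def)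
    also have "\<dots> = 0" by (rule sum.neutral) (auto simp: dl_def Wd_def Suc)
    finally show ?thesis by (simp add: sone_def Suc)
  qed
  then show ?thesis by (simp add: vec_eq_iff)
qed

lemma Ser_diff: "Ser A B (\<lambda>w. f w - g w) k = Ser A B f k - Ser A B g k"
  by (simp add: Ser_def vec_eq_iff right_diff_distrib sum_subtractf)

lemma L_Ser: "(\<lambda>k. mapm (linP F) (Psi A B k)) = Ser A B F"
proof
  fix k
  show "mapm (linP F) (Psi A B k) = Ser A B F k"
    by (simp add: Psi_Ser mapm_def Ser_def vec_eq_iff linP_sum linP_pc_mono)
qed

lemma Fd_entry: "Fd \<theta> a A B m $ l $ j = (\<Sum>w\<in>Wd m. Mw A B w $ l $ j * bdelta \<theta> a (a # w))"
proof -
  have e: "\<And>c w. mono [a] * (pc c * mono w) = pc c * mono (a # w)"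
    by (metis mult.assoc pc_central mono_mult append_Cons append_Nil)
  show ?thesis
    by (simp add: Fd_def mapm_def Psi_Ser Ser_def sum_distrib_left e lin_sum lin_pc_mono)
qed

lemma liftm_Fd: "(liftm C ** liftm (Fd \<theta> a A B m)) $ i $ j
    = (\<Sum>w\<in>Wd m. pc ((C ** Mw A B w) $ i $ j) * pc (bdelta \<theta> a (a # w)))"
proof -
  have "(liftm C ** liftm (Fd \<theta> a A B m)) $ i $ j = (\<Sum>l\<in>UNIV. pc (C $ i $ l) * pc (Fd \<theta> a A B m $ l $ j))"
    by (simp add: matrix_matrix_mult_def liftm_def mapm_def)
  also have "\<dots> = pc (\<Sum>l\<in>UNIV. C $ i $ l * Fd \<theta> a A B m $ l $ j)"
    by (simp only: pc_sum pc_mult)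
  also have "\<dots> = pc (\<Sum>l\<in>UNIV. C $ i $ l * (\<Sum>w\<in>Wd m. Mw A B w $ l $ j * bdelta \<theta> a (a # w)))"
    by (simp only: Fd_entry)
  also have "(\<Sum>l\<in>UNIV. C $ i $ l * (\<Sum>w\<in>Wd m. Mw A B w $ l $ j * bdelta \<theta> a (a # w)))
      = (\<Sum>w\<in>Wd m. (C ** Mw A B w) $ i $ j * bdelta \<theta> a (a # w))"
    by (simp add: matrix_matrix_mult_def sum_distrib_left sum_distrib_right mult.assoc sum.swap[of _ UNIV])
  finally show ?thesis by (simp add: pc_sum pc_mult)
qed

lemma Ser_Suc: "Ser A B G (Suc m) $ i $ j = (\<Sum>w\<in>Wd m. pc ((A ** Mw A B w) $ i $ j) * G (LX # w))
     + (\<Sum>w\<in>Wd m. pc ((B ** Mw A B w) $ i $ j) * G (LY # w))"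
  by (simp add: Ser_def Wd_Suc_sum)

lemma Ser_zero0: "G [] = 0 \<Longrightarrow> Ser A B G 0 = 0"
  by (simp add: Ser_def Wd_0 vec_eq_iff)

lemma zsG1: "(\<lambda>k. sone k - zs (\<lambda>m. liftm A ** liftm (Fd \<phi> LX A B m) + liftm B ** liftm (Fd \<phi> LY A B m)) k)
    = Ser A B (\<lambda>u. dl u - g1 \<phi> u)"
proof
  fix k
  have "zs (\<lambda>m. liftm A ** liftm (Fd \<phi> LX A B m) + liftm B ** liftm (Fd \<phi> LY A B m)) k = Ser A B (g1 \<phi>) k"
  proof (cases k)
    case 0 then show ?thesis by (simp add: zs_def Ser_zero0 g1_def)
  next
    case (Suc m)
    show ?thesis unfolding Suc
      by (simp add: zs_def vec_eq_iff Ser_Suc liftm_Fd g1_def)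
  qed
  then show "sone k - zs (\<lambda>m. liftm A ** liftm (Fd \<phi> LX A B m) + liftm B ** liftm (Fd \<phi> LY A B m)) k
      = Ser A B (\<lambda>u. dl u - g1 \<phi> u) k"
    by (simp add: Ser_diff Ser_dl)
qed

lemma zsG2: "(\<lambda>k. sone k - zs (\<lambda>m. liftm A ** liftm (Fd \<phi> LX A B m) + liftm B ** liftm (Fd \<psi> LY A B m)) k)
    = Ser A B (\<lambda>u. dl u - g2 \<phi> \<psi> u)"
proof
  fix k
  have "zs (\<lambda>m. liftm A ** liftm (Fd \<phi> LX A B m) + liftm B ** liftm (Fd \<psi> LY A B m)) k = Ser A B (g2 \<phi> \<psi>) k"
  proof (cases k)
    case 0 then show ?thesis by (simp add: zs_def Ser_zero0 g2_def)
  next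
    case (Suc m)
    show ?thesis unfolding Suc
      by (simp add: zs_def vec_eq_iff Ser_Suc liftm_Fd g2_def)
  qed
  then show "sone k - zs (\<lambda>m. liftm A ** liftm (Fd \<phi> LX A B m) + liftm B ** liftm (Fd \<psi> LY A B m)) k
      = Ser A B (\<lambda>u. dl u - g2 \<phi> \<psi> u) k"
    by (simp add: Ser_diff Ser_dl)
qed

lemma AX_part: "(\<Sum>w\<in>Wd m. pc ((A ** Mw A B w) $ i $ j) * (if w = [] then mono [LX] else 0))
    = (if m = 0 then pc (A $ i $ j) * mono [LX] else 0)"
proof (cases m)
  case 0 then show ?thesis by (simp add: Wd_0)
next
  case (Suc m')
  then show ?thesis by (auto intro!: sum.neutral simp: Wd_def)
qed

lemma zsG3: "(\<lambda>k. sone k - zs (\<lambda>m. (if m = 0 then (\<chi> i j. pc (A $ i $ j) * mono [LX]) else 0)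
                                    + liftm B ** liftm (Fd \<psi> LY A B m)) k)
    = Ser A B (\<lambda>u. dl u - f3 \<psi> u)"
proof
  fix k
  have "zs (\<lambda>m. (if m = 0 then (\<chi> i j. pc (A $ i $ j) * mono [LX]) else 0)
                                    + liftm B ** liftm (Fd \<psi> LY A B m)) k = Ser A B (f3 \<psi>) k"
  proof (cases k)
    case 0 then show ?thesis by (simp add: zs_def Ser_zero0 f3_def)
  next
    case (Suc m)
    have e1: "\<And>w. f3 \<psi> (LX # w) = (if w = [] then mono [LX] else 0)" by (simp add: f3_def)
    have e2: "\<And>w. f3 \<psi> (LY # w) = pc (bdelta \<psi> LY (LY # w))" by (simp add: f3_def)
    have "Ser A B (f3 \<psi>) (Suc m) $ i $ j = (if m = 0 then pc (A $ i $ j) * mono [LX] else 0)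
        + (liftm B ** liftm (Fd \<psi> LY A B m)) $ i $ j" for i j
      by (simp only: Ser_Suc e1 e2 AX_part liftm_Fd)
    then show ?thesis unfolding Suc
      by (simp add: zs_def vec_eq_iff)
  qed
  then show "sone k - zs (\<lambda>m. (if m = 0 then (\<chi> i j. pc (A $ i $ j) * mono [LX]) else 0)
                                    + liftm B ** liftm (Fd \<psi> LY A B m)) k
      = Ser A B (\<lambda>u. dl u - f3 \<psi> u) k"
    by (simp add: Ser_diff Ser_dl)
qed

lemma mm_rdistrib: "((X::'a::semiring_1^'n^'m) + Y) ** Z = X ** Z + Y ** Z"
  by (simp add: vec_eq_iff matrix_matrix_mult_def distrib_right sum.distrib)

lemma mm_sum_left: "(\<Sum>x\<in>S. f x) ** (N::'a::semiring_1^'p^'n) = (\<Sum>x\<in>S. (f x :: 'a^'n^'m) ** N)"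
  by (induction S rule: infinite_finite_induct) (auto simp: mm_rdistrib)

lemma mm_sum_right: "(M::'a::semiring_1^'n^'m) ** (\<Sum>x\<in>S. f x) = (\<Sum>x\<in>S. M ** (f x :: 'a^'p^'n))"
  by (induction S rule: infinite_finite_induct) (auto simp: matrix_add_ldistrib)

lemma smult_sone_left: "smult sone P = P"
proof
  fix k
  have "smult sone P k = (\<Sum>i\<le>k. if i = 0 then P k else 0)"
    unfolding smult_def by (rule sum.cong) (auto simp: sone_def)
  also have "\<dots> = P k" by (simp add: sum.delta)
  finally show "smult sone P k = P k" .
qed

lemma smult_sone_right: "smult P sone = P"
proof
  fix k
  have "smult P sone k = (\<Sum>i\<le>k. if i = k then P k else 0)"
    unfolding smult_def by (rule sum.cong) (auto simp: sone_def)
  also have "\<dots> = P k" by (simp add: sum.delta)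
  finally show "smult P sone k = P k" .
qed

lemma smult_assoc: "smult (smult P Q) R = smult P (smult Q R)"
proof
  fix k
  define F where "F j q = P j ** Q q ** R (k - j - q)" for j q
  have "smult (smult P Q) R k = (\<Sum>i\<le>k. \<Sum>j\<le>i. F j (i - j))"
    unfolding smult_def F_def by (simp add: mm_sum_left diff_diff_add)
  also have "\<dots> = (\<Sum>(j, q)\<in>{(j, q). j + q \<le> k}. F j q)"
    by (rule sum.triangle_reindex_eq[symmetric])
  also have "\<dots> = (\<Sum>(j, q)\<in>(SIGMA j:{..k}. {..k - j}). F j q)"
    by (rule sum.cong) auto
  also have "\<dots> = (\<Sum>j\<le>k. \<Sum>q\<le>k - j. F j q)"
    by (rule sum.Sigma[symmetric]) auto
  also have "\<dots> = smult P (smult Q R) k"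
    unfolding smult_def F_def by (simp add: mm_sum_right matrix_mul_assoc)
  finally show "smult (smult P Q) R k = smult P (smult Q R) k" .
qed

function rinv :: "('n::finite) mps \<Rightarrow> nat \<Rightarrow> ncpoly^'n^'n" where
  "rinv P k = (if k = 0 then mat 1 else - (\<Sum>i\<in>{1..k}. P i ** rinv P (k - i)))"
  by auto
termination by (relation "Wellfounded.measure (\<lambda>(P, k). k)") auto

function linv :: "('n::finite) mps \<Rightarrow> nat \<Rightarrow> ncpoly^'n^'n" where
  "linv P k = (if k = 0 then mat 1 else - (\<Sum>i\<in>{0..<k}. linv P i ** P (k - i)))"
  by auto
termination by (relation "Wellfounded.measure (\<lambda>(P, k). k)") auto

declare rinv.simps[simp del] linv.simps[simp del]

lemma rinv_0: "rinv P 0 = mat 1" by (subst rinv.simps) simp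
lemma rinv_pos: "0 < k \<Longrightarrow> rinv P k = - (\<Sum>i\<in>{1..k}. P i ** rinv P (k - i))" by (subst rinv.simps) simp
lemma linv_0: "linv P 0 = mat 1" by (subst linv.simps) simp
lemma linv_pos: "0 < k \<Longrightarrow> linv P k = - (\<Sum>i\<in>{0..<k}. linv P i ** P (k - i))" by (subst linv.simps) simp

lemma rinv_right: "P 0 = mat 1 \<Longrightarrow> smult P (rinv P) = sone"
proof
  fix k assume P0: "P 0 = mat 1"
  show "smult P (rinv P) k = sone k"
  proof (cases k)
    case 0 then show ?thesis by (simp add: smult_def P0 sone_def rinv_0)
  next
    case (Suc m)
    have s: "{..k} = insert 0 {1..k}" by auto
    have "smult P (rinv P) k = P 0 ** rinv P k + (\<Sum>i\<in>{1..k}. P i ** rinv P (k - i))"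
      unfolding smult_def s by (subst sum.insert) auto
    also have "\<dots> = 0"
    proof -
      have kp: "0 < k" using Suc by simp
      show ?thesis unfolding rinv_pos[of k, OF kp] P0 by simp
    qed
    finally show ?thesis by (simp add: sone_def Suc)
  qed
qed

lemma linv_left: "P 0 = mat 1 \<Longrightarrow> smult (linv P) P = sone"
proof
  fix k assume P0: "P 0 = mat 1"
  show "smult (linv P) P k = sone k"
  proof (cases k)
    case 0 then show ?thesis by (simp add: smult_def P0 sone_def linv_0)
  next
    case (Suc m)
    have s: "{..k} = insert k {0..<k}" by auto
    have "smult (linv P) P k = linv P k ** P 0 + (\<Sum>i\<in>{0..<k}. linv P i ** P (k - i))"
      unfolding smult_def s by (subst sum.insert) auto
    also have "\<dots> = 0"
    proof -
      have kp: "0 < k" using Suc by simp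
      show ?thesis unfolding linv_pos[of k, OF kp] P0 by simp
    qed
    finally show ?thesis by (simp add: sone_def Suc)
  qed
qed

lemma sinv_props:
  assumes P0: "P 0 = mat 1"
  shows "smult P (sinv P) = sone" "smult (sinv P) P = sone"
proof -
  have R: "smult P (rinv P) = sone" by (rule rinv_right[of P, OF P0])
  have L: "smult (linv P) P = sone" by (rule linv_left[of P, OF P0])
  have lr: "linv P = rinv P"
  proof -
    have "linv P = smult (linv P) sone" by (rule smult_sone_right[symmetric])
    also have "\<dots> = smult (linv P) (smult P (rinv P))" by (simp only: R)
    also have "\<dots> = smult (smult (linv P) P) (rinv P)" by (rule smult_assoc[symmetric])
    also have "\<dots> = smult sone (rinv P)" by (simp only: L)
    also have "\<dots> = rinv P" by (rule smult_sone_left)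
    finally show ?thesis .
  qed
  have ex: "smult P (rinv P) = sone \<and> smult (rinv P) P = sone"
    using R L lr by simp
  have un: "Q = rinv P" if "smult P Q = sone \<and> smult Q P = sone" for Q
  proof -
    have QP: "smult Q P = sone" using that by simp
    have "Q = smult Q sone" by (rule smult_sone_right[symmetric])
    also have "\<dots> = smult Q (smult P (rinv P))" by (simp only: R)
    also have "\<dots> = smult (smult Q P) (rinv P)" by (rule smult_assoc[symmetric])
    also have "\<dots> = smult sone (rinv P)" by (simp only: QP)
    also have "\<dots> = rinv P" by (rule smult_sone_left)
    finally show ?thesis .
  qed
  have "sinv P = rinv P" unfolding sinv_def
  proof (rule the_equality)
    show "smult P (rinv P) = sone \<and> smult (rinv P) P = sone" by (rule ex)
  next
    fix Q assume "smult P Q = sone \<and> smult Q P = sone"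
    then show "Q = rinv P" by (rule un)
  qed
  then show "smult P (sinv P) = sone" "smult (sinv P) P = sone" using ex by auto
qed

lemma P0_form: "(\<lambda>k. sone k - zs G k) 0 = (mat 1 :: ncpoly^'n::finite^'n)"
  by (simp add: sone_def zs_def)

theorem theorem6:
  fixes \<phi> \<psi> :: "letter list \<Rightarrow> complex" and A B :: "complex^'n^'n"
  assumes "\<phi> [] = 1" and "\<psi> [] = 1" and "cfree \<phi> \<psi>"
  shows "(\<lambda>k. mapm (linP (Ephi \<phi> \<psi>)) (Psi A B k)) =
    smult
      (sinv (\<lambda>k. sone k - zs (\<lambda>m. liftm A ** liftm (Fd \<phi> LX A B m)
                                  + liftm B ** liftm (Fd \<phi> LY A B m)) k))
      (smult
        (\<lambda>k. sone k - zs (\<lambda>m. liftm A ** liftm (Fd \<phi> LX A B m)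
                               + liftm B ** liftm (Fd \<psi> LY A B m)) k)
        (sinv (\<lambda>k. sone k - zs (\<lambda>m. (if m = 0 then (\<chi> i j. pc (A $ i $ j) * mono [LX]) else 0)
                                    + liftm B ** liftm (Fd \<psi> LY A B m)) k)))"
proof -
  note phi1 = assms(1) and psi1 = assms(2) and cf = assms(3)
  define P1 where "P1 = (\<lambda>k. sone k - zs (\<lambda>m. liftm A ** liftm (Fd \<phi> LX A B m)
                                  + liftm B ** liftm (Fd \<phi> LY A B m)) k)"
  define P2 where "P2 = (\<lambda>k. sone k - zs (\<lambda>m. liftm A ** liftm (Fd \<phi> LX A B m)
                               + liftm B ** liftm (Fd \<psi> LY A B m)) k)"
  define P3 where "P3 = (\<lambda>k. sone k - zs (\<lambda>m. (if m = 0 then (\<chi> i j. pc (A $ i $ j) * mono [LX]) else 0)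
                                    + liftm B ** liftm (Fd \<psi> LY A B m)) k)"
  have P1S: "P1 = Ser A B (\<lambda>u. dl u - g1 \<phi> u)" unfolding P1_def by (rule zsG1)
  have P2S: "P2 = Ser A B (\<lambda>u. dl u - g2 \<phi> \<psi> u)" unfolding P2_def by (rule zsG2)
  have P3S: "P3 = Ser A B (\<lambda>u. dl u - f3 \<psi> u)" unfolding P3_def by (rule zsG3)
  have P10: "P1 0 = mat 1" unfolding P1_def by (rule P0_form)
  have P30: "P3 0 = mat 1" unfolding P3_def by (rule P0_form)
  define L where "L = Ser A B (Ephi \<phi> \<psi>)"
  define E where "E = Ser A B (Epsi \<psi>)"
  have LL: "(\<lambda>k. mapm (linP (Ephi \<phi> \<psi>)) (Psi A B k)) = L" unfolding L_def by (rule L_Ser)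
  have E1: "smult P1 L = smult P2 E"
  proof
    fix k
    have c: "conv (\<lambda>u. dl u - g1 \<phi> u) (Ephi \<phi> \<psi>) = conv (\<lambda>u. dl u - g2 \<phi> \<psi> u) (Epsi \<psi>)"
      by (rule ext) (rule W1[OF cf phi1 psi1])
    show "smult P1 L k = smult P2 E k"
      unfolding P1S P2S L_def E_def Ser_mult c ..
  qed
  have E3: "smult P3 E = sone"
  proof
    fix k
    have c: "conv (\<lambda>u. dl u - f3 \<psi> u) (Epsi \<psi>) = dl"
      by (rule ext) (rule W3[OF cf phi1 psi1])
    show "smult P3 E k = sone k"
      unfolding P3S E_def Ser_mult c Ser_dl ..
  qed
  have S3: "sinv P3 = E"
  proof -
    have "E = smult sone E" by (rule smult_sone_left[symmetric])
    also have "\<dots> = smult (smult (sinv P3) P3) E" by (simp only: sinv_props(2)[of P3, OF P30])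
    also have "\<dots> = smult (sinv P3) (smult P3 E)" by (rule smult_assoc)
    also have "\<dots> = smult (sinv P3) sone" by (simp only: E3)
    also have "\<dots> = sinv P3" by (rule smult_sone_right)
    finally show ?thesis by simp
  qed
  have "smult (sinv P1) (smult P2 (sinv P3)) = L"
  proof -
    have "smult (sinv P1) (smult P2 (sinv P3)) = smult (sinv P1) (smult P1 L)" by (simp only: S3 E1)
    also have "\<dots> = smult (smult (sinv P1) P1) L" by (rule smult_assoc[symmetric])
    also have "\<dots> = smult sone L" by (simp only: sinv_props(2)[of P1, OF P10])
    also have "\<dots> = L" by (rule smult_sone_left)
    finally show ?thesis .
  qed
  then show ?thesis using LL unfolding P1_def P2_def P3_def by simp
qed

end
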